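(* Let $1<p\le 2$ and $f\in L^p_A(\mathbb{R}_+)$. Define $g:\mathbb{R}_+^*\to\mathbb{R}_+^*$ as follows: (i) if $\rho=0$ and $\alpha>0$, put $g(x)=x^{2(\alpha+1)}$; (ii) if $\rho>0$ (and $\alpha>-\tfrac12$), put $g(x)=x^{2(\alpha+1)}$ for $x>k$ and $g(x)=x^{3}$ for $0<x\le k$, where $k>0$ is the constant in the estimates (E2)–(E3) for $|c(\lambda)|^{-2}$. Then there is a constant $C>0$ independent of $f$ such that $$\int_{0}^{+\infty}(g(x))^{p-2}\,|\mathcal{F}(f)(x)|^{p}\,\frac{dx}{|c(x)|^{2}}\le C\,\|f\|_{A,p}^{p}.$$
   Context: Chébli–Trimèche setting. Let $\alpha>-\tfrac12$ and let $A:\mathbb{R}_+\to\mathbb{R}_+$ satisfy: (i) $A(x)=x^{2\alpha+1}B(x)$ with $B$ an even $C^\infty$ function on $\mathbb{R}$, $B\ge 1$ on $\mathbb{R}_+$; (ii) $A$ is increasing and unbounded; (iii) $A'/A$ is decreasing on $]0,+\infty[$ and $\lim_{x\to+\infty}A'(x)/A(x)=2\rho\ge 0$; (iv) there are $\eta>0$, $x_0>0$ and a $C^\infty$ function $F$ bounded together with all its derivatives such that for $x\ge x_0$, $A'(x)/A(x)=2\rho+e^{-\eta x}F(x)$ if $\rho>0$, and $A'(x)/A(x)=\frac{2\alpha+1}{x}+e^{-\eta x}F(x)$ if $\rho=0$. For $\lambda\in\mathbb{C}$, $\varphi_\lambda$ is the solution of $u''+\frac{A'}{A}u'=-(\lambda^2+\rho^2)u$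 on $]0,\infty[$ with $u(0)=1$, $u'(0)=0$. $L^p_A(\mathbb{R}_+)=L^p(\mathbb{R}_+,A(x)dx)$ with norm $\|\cdot\|_{A,p}$. For $f\in L^1_A$, $\mathcal{F}(f)(\lambda)=\int_0^\infty f(x)\varphi_\lambda(x)A(x)\,dx$. The function $|c(\lambda)|^{-2}$ is the even continuous Plancherel density on $\mathbb{R}$: $\mathcal{F}$ extends to an isometric isomorphism from $L^2_A(\mathbb{R}_+)$ onto $L^2_c(\mathbb{R}_+):=L^2(\mathbb{R}_+,|c(\lambda)|^{-2}d\lambda)$, $\|\mathcal F f\|_{c,\infty}\le\|f\|_{A,1}$, and by interpolation $\mathcal{F}$ is defined on $L^p_A$, $1\le p\le 2$, with values in $L^{p'}_c$ ($1/p+1/p'=1$). It satisfies, for positive constants $k,k_1,k_2$: (E1) if $\rho=0,\alpha>0$: $k_1|\lambda|^{2\alpha+1}\le|c(\lambda)|^{-2}\le k_2|\lambda|^{2\alpha+1}$ for all $\lambda$; if $\rho>0$: (E2) $k_1|\lambda|^{2\alpha+1}\le|c(\lambda)|^{-2}\le k_2|\lambda|^{2\alpha+1}$ for $|\lambda|>k$, and (E3) $k_1|\lambda|^{2}\le|c(\lambda)|^{-2}\le k_2|\lambda|^{2}$ for $|\lambda|\le k$. *)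

theory Defs
  imports "HOL-Analysis.Analysis"
begin

text \<open>Chebli--Trimeche setting. Functions on R_+ are modelled as functions on the reals
whose values on the negative half-line are ignored; all integrals are over ]0,+oo[
(the point 0 is a null set).\<close>

definition smooth_fun :: "(real \<Rightarrow> real) \<Rightarrow> bool" where
  "smooth_fun h \<longleftrightarrow> (\<forall>n x. ((deriv ^^ n) h) differentiable (at x))"

definition CT_hyp :: "real \<Rightarrow> real \<Rightarrow> (real \<Rightarrow> real) \<Rightarrow> (real \<Rightarrow> real) \<Rightarrow> bool" where
  "CT_hyp \<alpha> \<rho> B A \<longleftrightarrow>
     \<alpha> > -1/2 \<and>
     \<comment> \<open>(i)\<close>
     (\<forall>x\<ge>0. A x = x powr (2*\<alpha>+1) * B x) \<and> smooth_fun B \<and> (\<forall>x. B (-x) = B x) \<and>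
     (\<forall>x\<ge>0. B x \<ge> 1) \<and>
     \<comment> \<open>(ii)\<close>
     mono_on {0..} A \<and> (\<forall>M. \<exists>x\<ge>0. A x > M) \<and>
     \<comment> \<open>(iii)\<close>
     antimono_on {0<..} (\<lambda>x. deriv A x / A x) \<and> \<rho> \<ge> 0 \<and>
     ((\<lambda>x. deriv A x / A x) \<longlongrightarrow> 2*\<rho>) at_top \<and>
     \<comment> \<open>(iv)\<close>
     (\<exists>\<eta>>0. \<exists>x0>0. \<exists>F. smooth_fun F \<and> (\<forall>n. bounded (range ((deriv ^^ n) F))) \<and>
        (\<forall>x\<ge>x0. deriv A x / A x =
           (if \<rho> > 0 then 2*\<rho> else (2*\<alpha>+1)/x) + exp (-\<eta>*x) * F x))"

text \<open>phi l is the solution of u'' + (A'/A) u' = -(\<lambda>^2+\<rho>^2) u on ]0,oo[, u(0)=1, u'(0)=0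
 (only real \<lambda> are needed for the transform on R_+).\<close>
definition is_phi :: "real \<Rightarrow> (real \<Rightarrow> real) \<Rightarrow> (real \<Rightarrow> real \<Rightarrow> real) \<Rightarrow> bool" where
  "is_phi \<rho> A phi \<longleftrightarrow> (\<forall>l::real.
     continuous_on {0..} (phi l) \<and> phi l 0 = 1 \<and>
     (phi l has_real_derivative 0) (at 0 within {0..}) \<and>
     (\<forall>x>0. phi l differentiable (at x) \<and> deriv (phi l) differentiable (at x) \<and>
        deriv (deriv (phi l)) x + deriv A x / A x * deriv (phi l) x
          = -(l\<^sup>2 + \<rho>\<^sup>2) * phi l x))"

definition Lp_w :: "real \<Rightarrow> (real \<Rightarrow> real) \<Rightarrow> (real \<Rightarrow> complex) \<Rightarrow> bool" where
  "Lp_w p W f \<longleftrightarrow> set_borel_measurable lborel {0<..} f \<and>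
     (\<integral>\<^sup>+ x\<in>{0<..}. ennreal (cmod (f x) powr p * W x) \<partial>lborel) < \<infinity>"

definition normp_w :: "real \<Rightarrow> (real \<Rightarrow> real) \<Rightarrow> (real \<Rightarrow> complex) \<Rightarrow> ennreal" where
  "normp_w p W f = (\<integral>\<^sup>+ x\<in>{0<..}. ennreal (cmod (f x) powr p * W x) \<partial>lborel)"

definition FT :: "(real \<Rightarrow> real) \<Rightarrow> (real \<Rightarrow> real \<Rightarrow> real) \<Rightarrow> (real \<Rightarrow> complex) \<Rightarrow> real \<Rightarrow> complex" where
  "FT A phi f l = (LINT x:{0<..}|lborel. f x * complex_of_real (phi l x * A x))"

text \<open>Extension of the Fourier transform to L^p_A (1 < p \<le> 2), by density of L^1_A \<inter> L^p_A:
 h is the transform of f iff h \<in> L^{p'}_c and h is the L^{p'}_c-limit of FT f_n for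
 some sequence f_n in L^1_A \<inter> L^p_A converging to f in L^p_A.\<close>
definition FT_ext :: "real \<Rightarrow> (real \<Rightarrow> real) \<Rightarrow> (real \<Rightarrow> real) \<Rightarrow> (real \<Rightarrow> real \<Rightarrow> real)
    \<Rightarrow> (real \<Rightarrow> complex) \<Rightarrow> (real \<Rightarrow> complex) \<Rightarrow> bool" where
  "FT_ext p A W phi f h \<longleftrightarrow> Lp_w (p/(p-1)) W h \<and>
     (\<exists>fs. (\<forall>n. Lp_w 1 A (fs n) \<and> Lp_w p A (fs n)) \<and>
       (\<lambda>n. normp_w p A (\<lambda>x. fs n x - f x)) \<longlonglongrightarrow> 0 \<and>
       (\<lambda>n. normp_w (p/(p-1)) W (\<lambda>x. FT A phi (fs n) x - h x)) \<longlonglongrightarrow> 0)"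

text \<open>Plancherel density W = |c|^{-2}: even, continuous, Plancherel identity on L^1_A \<inter> L^2_A,
 the bound |FT f| \<le> ||f||_{A,1}, and the estimates (E1)--(E3) with constants k, k1, k2.\<close>
definition plancherel_density :: "real \<Rightarrow> real \<Rightarrow> (real \<Rightarrow> real) \<Rightarrow> (real \<Rightarrow> real \<Rightarrow> real)
    \<Rightarrow> (real \<Rightarrow> real) \<Rightarrow> real \<Rightarrow> real \<Rightarrow> real \<Rightarrow> bool" where
  "plancherel_density \<alpha> \<rho> A phi W k k1 k2 \<longleftrightarrow>
     (\<forall>x. W (-x) = W x) \<and> continuous_on UNIV W \<and> (\<forall>x. W x \<ge> 0) \<and>
     (\<forall>f. Lp_w 1 A f \<and> Lp_w 2 A f \<longrightarrow> normp_w 2 W (FT A phi f) = normp_w 2 A f) \<and>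
     (\<forall>f l. Lp_w 1 A f \<longrightarrow> ennreal (cmod (FT A phi f l)) \<le> normp_w 1 A f) \<and>
     k > 0 \<and> k1 > 0 \<and> k2 > 0 \<and>
     (\<rho> = 0 \<and> \<alpha> > 0 \<longrightarrow>
        (\<forall>l. k1 * \<bar>l\<bar> powr (2*\<alpha>+1) \<le> W l \<and> W l \<le> k2 * \<bar>l\<bar> powr (2*\<alpha>+1))) \<and>
     (\<rho> > 0 \<longrightarrow>
        (\<forall>l. \<bar>l\<bar> > k \<longrightarrow> k1 * \<bar>l\<bar> powr (2*\<alpha>+1) \<le> W l \<and> W l \<le> k2 * \<bar>l\<bar> powr (2*\<alpha>+1)) \<and>
        (\<forall>l. \<bar>l\<bar> \<le> k \<longrightarrow> k1 * l\<^sup>2 \<le> W l \<and> W l \<le> k2 * l\<^sup>2))"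

definition gw :: "real \<Rightarrow> real \<Rightarrow> real \<Rightarrow> real \<Rightarrow> real" where
  "gw \<alpha> \<rho> k x = (if \<rho> = 0 then x powr (2*(\<alpha>+1))
                  else if x > k then x powr (2*(\<alpha>+1)) else x ^ 3)"

end

theory Submission
  imports Defs
begin


lemma CT_facts:
  assumes "CT_hyp \<alpha> \<rho> B A"
  shows "\<And>x. x > 0 \<Longrightarrow> A x > 0" "\<And>x y. 0 \<le> x \<Longrightarrow> x \<le> y \<Longrightarrow> A x \<le> A y"
    "continuous_on {0..} A" "\<And>x. x > 0 \<Longrightarrow> (A has_real_derivative deriv A x) (at x)"
    "\<alpha> > -1/2" "\<rho> \<ge> 0" "\<And>x. x \<ge> 0 \<Longrightarrow> A x \<ge> 0"
proof -
  have h: "\<forall>x\<ge>0. A x = x powr (2*\<alpha>+1) * B x" "smooth_fun B" "\<forall>x\<ge>0. B x \<ge> 1"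
     "mono_on {0..} A" "\<alpha> > -1/2" "\<rho> \<ge> 0"
    using assms unfolding CT_hyp_def by auto
  show "\<alpha> > -1/2" "\<rho> \<ge> 0" using h by auto
  show "A x > 0" if "x > 0" for x using h(1,3) that by (smt (verit) mult_pos_pos powr_gt_zero)
  show "A x \<le> A y" if "0 \<le> x" "x \<le> y" for x y using h(4) that by (auto simp: mono_on_def)
  show "A x \<ge> 0" if "x \<ge> 0" for x
  proof -
    have "B x \<ge> 0" using h(3) that by force
    then show ?thesis using h(1) that by simp
  qed
  have Bd: "B differentiable (at x)" for x using h(2) unfolding smooth_fun_def
    by (metis funpow_0)
  have Bc: "continuous_on UNIV B"
    using Bd by (simp add: continuous_at_imp_continuous_on differentiable_imp_continuous_within)
  have "continuous_on {0..} (\<lambda>x. x powr (2*\<alpha>+1) * B x)"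
    by (intro continuous_intros continuous_on_powr' continuous_on_subset[OF Bc]) (use h(5) in auto)
  then show "continuous_on {0..} A" by (rule continuous_on_cong[THEN iffD1, rotated 2]) (use h(1) in auto)
  show "(A has_real_derivative deriv A x) (at x)" if x: "x > 0" for x
  proof -
    obtain D where D: "(B has_real_derivative D) (at x)" using Bd[of x]
      by (auto simp: real_differentiable_def)
    have "((\<lambda>x. x powr (2*\<alpha>+1) * B x) has_real_derivative
       ((2*\<alpha>+1) * x powr (2*\<alpha>+1 - 1) * B x + x powr (2*\<alpha>+1) * D)) (at x)"
      using x by (auto intro!: derivative_eq_intros D)
    then have d: "(A has_real_derivative
       ((2*\<alpha>+1) * x powr (2*\<alpha>+1 - 1) * B x + x powr (2*\<alpha>+1) * D)) (at x)"
      by (rule has_field_derivative_transform_within_open[where S="{0<..}"]) (use x h(1) in auto)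
    then show ?thesis using DERIV_imp_deriv by metis
  qed
qed

lemma meas_cont_ind:
  fixes g :: "real \<Rightarrow> 'b::real_normed_vector"
  assumes "S \<in> sets borel" "continuous_on S g"
  shows "(\<lambda>x. indicator S x *\<^sub>R g x) \<in> borel_measurable lborel"
  using borel_measurable_continuous_on_indicator[OF assms] by simp

lemma phi_le1_pos:
  fixes u :: "real \<Rightarrow> real" and A :: "real \<Rightarrow> real"
  assumes Apos: "\<And>x. x > 0 \<Longrightarrow> A x > 0"
    and Amono: "\<And>x y. 0 \<le> x \<Longrightarrow> x \<le> y \<Longrightarrow> A x \<le> A y"
    and Acont: "continuous_on {0..} A"
    and cu: "continuous_on {0..} (phi l)"
    and L1: "\<And>f. Lp_w 1 A f \<Longrightarrow> ennreal (cmod (FT A phi f l)) \<le> normp_w 1 A f"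
    and x0: "x0 > 0"
  shows "\<bar>phi l x0\<bar> \<le> 1"
proof (rule ccontr)
  assume "\<not> \<bar>phi l x0\<bar> \<le> 1"
  hence gt: "\<bar>phi l x0\<bar> > 1" by simp
  define m where "m = (1 + \<bar>phi l x0\<bar>)/2"
  have m1: "m > 1" "m < \<bar>phi l x0\<bar>" using gt by (auto simp: m_def)
  have "continuous (at x0 within {0..}) (phi l)"
    using cu x0 by (simp add: continuous_on_eq_continuous_within)
  then obtain d where d: "d > 0" "\<And>y. y \<in> {0..} \<Longrightarrow> dist y x0 < d \<Longrightarrow> dist (phi l y) (phi l x0) < \<bar>phi l x0\<bar> - m"
    using m1 unfolding continuous_within_eps_delta by (metis diff_gt_0_iff_gt)
  define S where "S = {x0..x0+d/2}"
  have Spos: "y \<in> S \<Longrightarrow> y > 0" for y using x0 by (auto simp: S_def)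
  have big: "y \<in> S \<Longrightarrow> \<bar>phi l y\<bar> > m" for y
    using d(2)[of y] d(1) x0 by (auto simp: S_def dist_real_def)
  have cuS: "continuous_on S (phi l)" by (rule continuous_on_subset[OF cu]) (use Spos in force)
  have cAS: "continuous_on S A" by (rule continuous_on_subset[OF Acont]) (use Spos in force)
  have cS: "compact S" by (simp add: S_def)
  obtain Mp where Mp: "\<And>y. y \<in> S \<Longrightarrow> \<bar>phi l y\<bar> \<le> Mp"
    using compact_imp_bounded[OF compact_continuous_image[OF cuS cS]]
    unfolding bounded_iff by (auto simp: real_norm_def)
  define f where "f y = indicator S y * complex_of_real (phi l y / \<bar>phi l y\<bar>)" for y
  have nz: "y \<in> S \<Longrightarrow> phi l y \<noteq> 0" for y using big m1 by force
  have cf: "continuous_on S (\<lambda>y. complex_of_real (phi l y / \<bar>phi l y\<bar>))"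
    using nz by (intro continuous_intros cuS) auto
  have "f = (\<lambda>y. indicator S y *\<^sub>R complex_of_real (phi l y / \<bar>phi l y\<bar>))"
    by (simp add: f_def fun_eq_iff scaleR_conv_of_real indicator_def)
  then have fmeas: "f \<in> borel_measurable lborel"
    using meas_cont_ind[OF _ cf] by (simp add: S_def)
  have cmf: "cmod (f y) = indicator S y" for y
    using nz[of y] by (auto simp: f_def indicator_def norm_divide)
  have Aup: "y \<in> S \<Longrightarrow> A y \<le> A (x0 + d/2)" for y using Amono[of y "x0+d/2"] Spos[of y] by (auto simp: S_def)
  have Alo: "y \<in> S \<Longrightarrow> A x0 \<le> A y" for y using Amono[of x0 y] x0 by (auto simp: S_def)
  have AS_meas: "(\<lambda>y. indicator S y * A y) \<in> borel_measurable lborel"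
    using meas_cont_ind[OF _ cAS] by (simp add: S_def)
  define N where "N = (\<integral>\<^sup>+ y. ennreal (indicator S y * A y) \<partial>lborel)"
  have normeq: "normp_w 1 A f = N"
    unfolding normp_w_def N_def
    by (rule nn_integral_cong) (auto simp: cmf indicator_def Spos)
  have Nfin: "N < \<infinity>"
  proof -
    have "N \<le> (\<integral>\<^sup>+ y. ennreal (A (x0+d/2)) * indicator S y \<partial>lborel)"
      unfolding N_def by (intro nn_integral_mono) (auto simp: indicator_def Aup ennreal_leI)
    also have "\<dots> = ennreal (A (x0+d/2)) * ennreal (d/2)"
      using d unfolding S_def by (subst nn_integral_cmult_indicator) auto
    also have "\<dots> < \<infinity>" by (simp add: ennreal_mult_less_top)
    finally show ?thesis .
  qed
  have Npos: "N > 0"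
  proof -
    have "(\<integral>\<^sup>+ y. ennreal (A x0) * indicator S y \<partial>lborel) \<le> N"
      unfolding N_def by (intro nn_integral_mono) (auto simp: indicator_def Alo ennreal_leI)
    moreover have "(\<integral>\<^sup>+ y. ennreal (A x0) * indicator S y \<partial>lborel) = ennreal (A x0) * ennreal (d/2)"
      using d unfolding S_def by (subst nn_integral_cmult_indicator) auto
    moreover have "ennreal (A x0) * ennreal (d/2) > 0" using d Apos[OF x0]
      by (simp add: ennreal_mult''[symmetric])
    ultimately show ?thesis by order
  qed
  have Lf: "Lp_w 1 A f"
    unfolding Lp_w_def set_borel_measurable_def
    using fmeas normeq Nfin unfolding normp_w_def by auto
  define g where "g y = indicator S y * (\<bar>phi l y\<bar> * A y)" for y
  have gmeas: "g \<in> borel_measurable lborel"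
    using meas_cont_ind[OF _ continuous_on_mult[OF continuous_on_rabs[OF cuS] cAS]]
    by (simp add: g_def[abs_def] S_def)
  have g_int: "integrable lborel g"
  proof (subst integrable_iff_bounded, intro conjI gmeas)
    have "(\<integral>\<^sup>+ y. ennreal (norm (g y)) \<partial>lborel) \<le> (\<integral>\<^sup>+ y. ennreal (Mp * A (x0+d/2)) * indicator S y \<partial>lborel)"
    proof (intro nn_integral_mono)
      fix y show "ennreal (norm (g y)) \<le> ennreal (Mp * A (x0+d/2)) * indicator S y"
      proof (cases "y \<in> S")
        case True
        have "\<bar>phi l y\<bar> * A y \<le> Mp * A (x0+d/2)"
          using Mp[OF True] Aup[OF True] Apos[OF Spos[OF True]] by (intro mult_mono) auto
        then show ?thesis using True Apos[OF Spos[OF True]] by (auto simp: g_def ennreal_leI)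
      qed (auto simp: g_def)
    qed
    also have "\<dots> < \<infinity>" using d unfolding S_def by (subst nn_integral_cmult_indicator) (auto simp: ennreal_mult_less_top)
    finally show "(\<integral>\<^sup>+ y. ennreal (norm (g y)) \<partial>lborel) < \<infinity>" .
  qed
  have FTeq: "FT A phi f l = complex_of_real (integral\<^sup>L lborel g)"
  proof -
    have "FT A phi f l = integral\<^sup>L lborel (\<lambda>y. complex_of_real (g y))"
      unfolding FT_def set_lebesgue_integral_def
    proof (rule Bochner_Integration.integral_cong)
      fix y show "indicator {0<..} y *\<^sub>R (f y * complex_of_real (phi l y * A y)) = complex_of_real (g y)"
      proof (cases "y \<in> S")
        case True
        have e: "phi l y / \<bar>phi l y\<bar> * (phi l y * A y) = \<bar>phi l y\<bar> * A y"
          using nz[OF True] by (cases "phi l y \<ge> 0") (auto simp: field_simps)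
        have "indicator {0<..} y *\<^sub>R (f y * complex_of_real (phi l y * A y)) = f y * complex_of_real (phi l y * A y)"
          using Spos[OF True] by simp
        also have "\<dots> = complex_of_real (phi l y / \<bar>phi l y\<bar> * (phi l y * A y))"
          using True by (simp add: f_def)
        also have "\<dots> = complex_of_real (g y)" using e True by (simp add: g_def)
        finally show ?thesis .
      qed (simp add: f_def g_def)
    qed simp
    then show ?thesis by simp
  qed
  have gnn: "0 \<le> g y" for y
  proof (cases "y \<in> S")
    case True then show ?thesis using Apos[OF Spos[OF True]] by (simp add: g_def)
  qed (simp add: g_def)
  have "ennreal m * N = (\<integral>\<^sup>+ y. ennreal m * ennreal (indicator S y * A y) \<partial>lborel)"
    unfolding N_def by (rule nn_integral_cmult[symmetric]) (use AS_meas in auto)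
  also have "\<dots> \<le> (\<integral>\<^sup>+ y. ennreal (g y) \<partial>lborel)"
  proof (intro nn_integral_mono)
    fix y show "ennreal m * ennreal (indicator S y * A y) \<le> ennreal (g y)"
    proof (cases "y \<in> S")
      case True
      have "m * A y \<le> \<bar>phi l y\<bar> * A y"
        using big[OF True] Apos[OF Spos[OF True]] by simp
      then show ?thesis using True m1 Apos[OF Spos[OF True]] by (auto simp: g_def ennreal_mult''[symmetric] ennreal_leI)
    qed (auto simp: g_def)
  qed
  also have "\<dots> = ennreal (cmod (FT A phi f l))"
    using FTeq nn_integral_eq_integral[OF g_int] gnn
    by (simp add: integral_nonneg_AE)
  also have "\<dots> \<le> N" using L1[OF Lf] normeq by simp
  finally have le: "ennreal m * N \<le> N" .
  obtain n where n: "N = ennreal n" "n > 0" using Nfin Npos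
    by (cases N) auto
  have "ennreal (m * n) \<le> ennreal n" using le n m1 by (simp add: ennreal_mult)
  then have "m * n \<le> n" using n by (simp add: ennreal_le_iff)
  moreover have "1 * n < m * n" by (rule mult_strict_right_mono) (use m1 n in auto)
  ultimately show False by simp
qed

lemma ode_identity:
  fixes u A :: "real \<Rightarrow> real" and \<mu> :: real
  assumes Apos: "\<And>x. x > 0 \<Longrightarrow> A x > 0"
    and Amono: "\<And>x y. 0 \<le> x \<Longrightarrow> x \<le> y \<Longrightarrow> A x \<le> A y"
    and Acont: "continuous_on {0..} A"
    and Ader: "\<And>x. x > 0 \<Longrightarrow> (A has_real_derivative deriv A x) (at x)"
    and cu: "continuous_on {0..} u" and u0: "u 0 = 1"
    and ud0: "(u has_real_derivative 0) (at 0 within {0..})"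
    and ode: "\<And>x. x > 0 \<Longrightarrow> u differentiable (at x) \<and> deriv u differentiable (at x) \<and>
        deriv (deriv u) x + deriv A x / A x * deriv u x = -\<mu> * u x"
  shows "\<And>x. x > 0 \<Longrightarrow> A x * deriv u x = -\<mu> * integral {0..x} (\<lambda>s. A s * u s)"
proof -
  define I where "I = (\<lambda>x. integral {0..x} (\<lambda>s. A s * u s))"
  have cAu: "continuous_on {0..} (\<lambda>s. A s * u s)" by (intro continuous_intros Acont cu)
  have Ider: "(I has_real_derivative A x * u x) (at x)" if x: "x > 0" for x
  proof -
    have "(I has_real_derivative A x * u x) (at x within {0..x+1})"
      unfolding I_def by (rule integral_has_real_derivative) (use x in \<open>auto intro: continuous_on_subset[OF cAu]\<close>)
    then show ?thesis using x by (simp add: at_within_Icc_at)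
  qed
  define G where "G = (\<lambda>x. A x * deriv u x + \<mu> * I x)"
  have Gder: "(G has_real_derivative 0) (at x)" if x: "x > 0" for x
  proof -
    have u1: "(u has_real_derivative deriv u x) (at x)" using ode[OF x]
      by (simp add: DERIV_deriv_iff_real_differentiable)
    have u2: "(deriv u has_real_derivative deriv (deriv u) x) (at x)" using ode[OF x]
      by (simp add: DERIV_deriv_iff_real_differentiable)
    have e: "deriv (deriv u) x + deriv A x / A x * deriv u x = -\<mu> * u x" using ode[OF x] by simp
    have "(G has_real_derivative (deriv A x * deriv u x + deriv (deriv u) x * A x + \<mu> * (A x * u x))) (at x)"
      unfolding G_def by (intro DERIV_add DERIV_mult Ader[OF x] u2 DERIV_cmult Ider[OF x])
    moreover have "deriv A x * deriv u x + deriv (deriv u) x * A x + \<mu> * (A x * u x) = 0"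
    proof -
      have "A x * (deriv (deriv u) x + deriv A x / A x * deriv u x) = A x * deriv (deriv u) x + deriv A x * deriv u x"
        using Apos[OF x] by (simp add: field_simps)
      moreover have "A x * (deriv (deriv u) x + deriv A x / A x * deriv u x) = - \<mu> * (A x * u x)" using e by simp
      ultimately show ?thesis by (simp add: algebra_simps)
    qed
    ultimately show ?thesis by simp
  qed
  obtain c where c: "\<And>x. x \<in> {0<..} \<Longrightarrow> G x = c"
    using has_field_derivative_zero_constant[of "{0<..}" G] Gder
    by (metis convex_real_interval(3) greaterThan_iff has_field_derivative_at_within)
  have c0: "c = 0"
  proof (rule ccontr)
    assume cne: "c \<noteq> 0"
    have I0: "I 0 = 0" by (simp add: I_def)
    have "continuous_on {0..1} I" unfolding I_def
      by (intro indefinite_integral_continuous_1 integrable_continuous_interval continuous_on_subset[OF cAu]) auto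
    then have "continuous (at 0 within {0..1}) I" by (simp add: continuous_on_eq_continuous_within)
    then obtain \<delta> where \<delta>: "\<delta> > 0" "\<And>y. y \<in> {0..1} \<Longrightarrow> dist y 0 < \<delta> \<Longrightarrow> dist (I y) (I 0) < \<bar>c\<bar> / (2 * (\<bar>\<mu>\<bar> + 1))"
    proof -
      have epos: "\<bar>c\<bar> / (2 * (\<bar>\<mu>\<bar> + 1)) > 0" using cne by (intro divide_pos_pos) auto
      show ?thesis using \<open>continuous (at 0 within {0..1}) I\<close> epos that
        unfolding continuous_within_eps_delta by blast
    qed
    define c' where "c' = \<bar>c\<bar> / (2 * A 1)"
    have A1: "A 1 > 0" using Apos by simp
    have c'pos: "c' > 0" using cne A1 by (simp add: c'_def)
    have lowd: "\<bar>deriv u x\<bar> \<ge> c'" if x: "0 < x" "x < \<delta>" "x \<le> 1" for x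
    proof -
      have "\<bar>I x\<bar> < \<bar>c\<bar> / (2 * (\<bar>\<mu>\<bar> + 1))" using \<delta>(2)[of x] x I0 by (auto simp: dist_real_def)
      hence "\<bar>\<mu> * I x\<bar> \<le> \<bar>c\<bar>/2"
      proof -
        assume h: "\<bar>I x\<bar> < \<bar>c\<bar> / (2 * (\<bar>\<mu>\<bar> + 1))"
        have "\<bar>\<mu> * I x\<bar> = \<bar>\<mu>\<bar> * \<bar>I x\<bar>" by (simp add: abs_mult)
        also have "\<dots> \<le> (\<bar>\<mu>\<bar> + 1) * (\<bar>c\<bar> / (2 * (\<bar>\<mu>\<bar> + 1)))"
          using h by (intro mult_mono) auto
        also have "\<dots> = \<bar>c\<bar>/2" by (simp add: field_simps)
        finally show ?thesis .
      qed
      moreover have "A x * deriv u x + \<mu> * I x = c" using c[of x] x by (simp add: G_def)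
      ultimately have "\<bar>A x * deriv u x\<bar> \<ge> \<bar>c\<bar>/2" by linarith
      moreover have "\<bar>A x * deriv u x\<bar> \<le> A 1 * \<bar>deriv u x\<bar>"
        using Amono[of x 1] Apos[of x] x by (simp add: abs_mult mult_right_mono)
      ultimately have "\<bar>c\<bar>/2 \<le> A 1 * \<bar>deriv u x\<bar>" by linarith
      then show ?thesis using A1 by (simp add: c'_def field_simps)
    qed
    have "((\<lambda>y. (u y - u 0) / (y - 0)) \<longlongrightarrow> 0) (at 0 within {0..})"
      using ud0 by (simp add: has_field_derivative_iff)
    then have "\<forall>\<^sub>F y in at 0 within {0..}. dist ((u y - u 0) / (y - 0)) 0 < c'/8"
      using c'pos by (intro tendstoD) auto
    then obtain \<eta> where \<eta>: "\<eta> > 0" "\<And>y. y \<in> {0..} \<Longrightarrow> y \<noteq> 0 \<Longrightarrow> dist y 0 < \<eta> \<Longrightarrow> \<bar>(u y - 1) / y\<bar> < c'/8"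
      unfolding eventually_at by (auto simp: u0 dist_real_def)
    define x where "x = min (min \<delta> 1) \<eta> / 2"
    have x: "x > 0" "x < \<delta>" "x \<le> 1" "x < \<eta>" using \<delta> \<eta> by (auto simp: x_def)
    have e1: "\<bar>u x - 1\<bar> < c'/8 * x"
      using \<eta>(2)[of x] x by (auto simp: dist_real_def abs_divide divide_less_eq)
    have e2: "\<bar>u (x/2) - 1\<bar> < c'/8 * (x/2)"
    proof -
      have hh: "x/2 \<in> {0..}" "x/2 \<noteq> 0" "dist (x/2) 0 < \<eta>" using x by (auto simp: dist_real_def)
      have h0: "\<bar>(u (x/2) - 1) / (x/2)\<bar> < c'/8" by (rule \<eta>(2)[OF hh])
      have "x/2 > 0" using x by simp
      then have h: "\<bar>u (x/2) - 1\<bar> / (x/2) < c'/8" using h0 by (metis abs_divide abs_of_pos)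
      show ?thesis by (rule pos_divide_less_eq[THEN iffD1, OF \<open>x/2 > 0\<close> h])
    qed
    obtain l z where lz: "x/2 < z" "z < x" "DERIV u z :> l" "u x - u (x/2) = (x - x/2) * l"
    proof -
      have cont: "continuous_on {x/2..x} u" by (rule continuous_on_subset[OF cu]) (use x in auto)
      have dif: "\<And>y. x/2 < y \<Longrightarrow> y < x \<Longrightarrow> u differentiable (at y)"
        using ode x by (meson half_gt_zero less_trans)
      have "x/2 < x" using x by simp
      from MVT[OF this cont dif] show ?thesis using that by blast
    qed
    have "l = deriv u z" using lz(3) by (simp add: DERIV_imp_deriv)
    then have "\<bar>l\<bar> \<ge> c'" using lowd[of z] lz x by auto
    then have "(x/2) * c' \<le> (x/2) * \<bar>l\<bar>" using x by (intro mult_left_mono) auto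
    also have "\<dots> = \<bar>u x - u (x/2)\<bar>"
    proof -
      have "x - x/2 = x/2" by simp
      then have d: "u x - u (x/2) = (x/2) * l" using lz(4) by metis
      show ?thesis unfolding d abs_mult using x by simp
    qed
    finally have "\<bar>u x - u (x/2)\<bar> \<ge> (x/2) * c'" .
    moreover have "\<bar>u x - u (x/2)\<bar> \<le> \<bar>u x - 1\<bar> + \<bar>u (x/2) - 1\<bar>" by linarith
    moreover have "x/2*c' = (c'*x)/2" "c'/8*x = (c'*x)/8" "c'/8*(x/2) = (c'*x)/16" by simp_all
    moreover have "c'*x > 0" using x c'pos by simp
    ultimately show False using e1 e2 by linarith
  qed
  fix x :: real assume x: "x > 0"
  show "A x * deriv u x = -\<mu> * integral {0..x} (\<lambda>s. A s * u s)"
    using c[of x] c0 x by (simp add: G_def I_def algebra_simps)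
qed

lemma gronwall:
  fixes \<psi> :: "real \<Rightarrow> real"
  assumes cont: "continuous_on {0..X} \<psi>" and K: "K > 0" and a: "a \<ge> 0"
    and le: "\<And>x. x \<in> {0..X} \<Longrightarrow> \<psi> x \<le> a + K * integral {0..x} \<psi>"
    and x: "x \<in> {0..X}"
  shows "\<psi> x \<le> a * exp (K * x)"
proof -
  define J where "J = (\<lambda>x. integral {0..x} \<psi>)"
  define F where "F = (\<lambda>x. exp (-K*x) * J x + (a/K) * exp (-K*x))"
  have Jc: "continuous_on {0..X} J" unfolding J_def
    by (intro indefinite_integral_continuous_1 integrable_continuous_interval cont)
  have Jd: "(J has_real_derivative \<psi> y) (at y)" if "0 < y" "y < X" for y
  proof -
    have "(J has_real_derivative \<psi> y) (at y within {0..X})" unfolding J_def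
      by (rule integral_has_real_derivative[OF cont]) (use that in auto)
    then show ?thesis using that by (simp add: at_within_Icc_at)
  qed
  have J0: "J 0 = 0" by (simp add: J_def)
  have "F x \<le> F 0"
  proof (cases "x = 0")
    case False
    then have x0: "0 < x" using x by auto
    have Fc: "continuous_on {0..x} F" unfolding F_def
      by (intro continuous_intros continuous_on_subset[OF Jc]) (use x in auto)
    have Fd: "(F has_real_derivative (exp (-K*y) * (\<psi> y - K * J y - a))) (at y)" if "0 < y" "y < x" for y
    proof -
      have "(F has_real_derivative (- K * exp (-K*y) * J y + exp (-K*y) * \<psi> y + (a/K) * (- K * exp (-K*y)))) (at y)"
        unfolding F_def using that x
        by (auto intro!: derivative_eq_intros Jd)
      moreover have "- K * exp (-K*y) * J y + exp (-K*y) * \<psi> y + (a/K) * (- K * exp (-K*y))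
          = exp (-K*y) * (\<psi> y - K * J y - a)" using K by (simp add: field_simps)
      ultimately show ?thesis by simp
    qed
    obtain l z where lz: "0 < z" "z < x" "DERIV F z :> l" "F x - F 0 = (x - 0) * l"
      using MVT[OF x0 Fc] Fd by (meson real_differentiable_def)
    have "l = exp (-K*z) * (\<psi> z - K * J z - a)" using lz(3) Fd[OF lz(1,2)] by (rule DERIV_unique)
    moreover have "\<psi> z - K * J z - a \<le> 0" using le[of z] lz x by (auto simp: J_def)
    ultimately have "l \<le> 0" by (simp add: mult_nonneg_nonpos)
    then have "x * l \<le> 0" using x0 by (simp add: mult_nonneg_nonpos)
    then show ?thesis using lz(4) by simp
  qed (simp)
  then have "exp (-K*x) * (J x + a/K) \<le> a/K" by (simp add: F_def J0 algebra_simps)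
  then have "J x + a/K \<le> a/K * exp (K*x)"
    by (simp add: exp_minus field_simps)
  then have "K * (J x + a/K) \<le> K * (a/K * exp (K*x))" using K by (intro mult_left_mono) auto
  moreover have "K * (J x + a/K) = K * J x + a" "K * (a/K * exp (K*x)) = a * exp (K*x)" using K by (auto simp: field_simps)
  ultimately have "K * J x \<le> a * exp (K*x) - a" by linarith
  then show ?thesis using le[OF x] by (simp add: J_def)
qed

lemma phi_diff_bound:
  fixes u v A :: "real \<Rightarrow> real" and \<mu> \<nu> X :: real
  assumes Apos: "\<And>x. x > 0 \<Longrightarrow> A x > 0" and Ann: "\<And>x. x \<ge> 0 \<Longrightarrow> A x \<ge> 0"
    and Amono: "\<And>x y. 0 \<le> x \<Longrightarrow> x \<le> y \<Longrightarrow> A x \<le> A y"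
    and Acont: "continuous_on {0..} A"
    and cu: "continuous_on {0..} u" and cv: "continuous_on {0..} v" and uv0: "u 0 = v 0"
    and du: "\<And>x. x > 0 \<Longrightarrow> u differentiable (at x)"
    and dv: "\<And>x. x > 0 \<Longrightarrow> v differentiable (at x)"
    and iu: "\<And>x. x > 0 \<Longrightarrow> A x * deriv u x = -\<mu> * integral {0..x} (\<lambda>s. A s * u s)"
    and iv: "\<And>x. x > 0 \<Longrightarrow> A x * deriv v x = -\<nu> * integral {0..x} (\<lambda>s. A s * v s)"
    and vb: "\<And>x. x \<ge> 0 \<Longrightarrow> \<bar>v x\<bar> \<le> 1"
    and X: "X > 0"
  shows "\<bar>u X - v X\<bar> \<le> \<bar>\<mu> - \<nu>\<bar> * X\<^sup>2 * exp ((X * \<bar>\<mu>\<bar> + 1) * X)"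
proof -
  define w where "w = (\<lambda>x. u x - v x)"
  have cw: "continuous_on {0..} w" unfolding w_def by (intro continuous_intros cu cv)
  have caw: "continuous_on {0..} (\<lambda>s. \<bar>w s\<bar>)" by (intro continuous_intros cw)
  define J where "J = (\<lambda>t. integral {0..t} (\<lambda>s. \<bar>w s\<bar>))"
  have intc: "f integrable_on {0..t}" if "continuous_on {0..} f" for f :: "real \<Rightarrow> real" and t
    by (intro integrable_continuous_interval continuous_on_subset[OF that]) auto
  have Jmono: "J z \<le> J x" if "0 \<le> z" "z \<le> x" for z x
    unfolding J_def by (rule integral_subset_le) (use that in \<open>auto intro: intc[OF caw]\<close>)
  have Jnn: "J x \<ge> 0" for x unfolding J_def by (rule integral_nonneg) (auto intro: intc[OF caw])
  have wd: "\<bar>deriv u t - deriv v t\<bar> \<le> \<bar>\<mu>\<bar> * J t + \<bar>\<mu> - \<nu>\<bar> * t" if t: "0 < t" for t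
  proof -
    define g where "g = (\<lambda>s. A s * (\<mu> * w s + (\<mu> - \<nu>) * v s))"
    have "A t * (deriv u t - deriv v t) = -(\<mu> * integral {0..t} (\<lambda>s. A s * u s) - \<nu> * integral {0..t} (\<lambda>s. A s * v s))"
      using iu[OF t] iv[OF t] by (simp add: algebra_simps)
    also have "\<mu> * integral {0..t} (\<lambda>s. A s * u s) - \<nu> * integral {0..t} (\<lambda>s. A s * v s)
        = integral {0..t} (\<lambda>s. \<mu> * (A s * u s) - \<nu> * (A s * v s))"
      by (subst integral_diff) (auto intro!: integrable_on_cmult_left intc continuous_intros Acont cu cv)
    also have "(\<lambda>s. \<mu> * (A s * u s) - \<nu> * (A s * v s)) = g"
      by (auto simp: g_def w_def algebra_simps)
    finally have e: "A t * (deriv u t - deriv v t) = - integral {0..t} g" .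
    have "\<bar>integral {0..t} g\<bar> \<le> integral {0..t} (\<lambda>s. A t * (\<bar>\<mu>\<bar> * \<bar>w s\<bar> + \<bar>\<mu> - \<nu>\<bar>))"
    proof (rule integral_norm_bound_integral[where f=g, simplified real_norm_def])
      show "g integrable_on {0..t}" unfolding g_def w_def by (intro intc continuous_intros Acont cu cv)
      show "(\<lambda>s. A t * (\<bar>\<mu>\<bar> * \<bar>w s\<bar> + \<bar>\<mu> - \<nu>\<bar>)) integrable_on {0..t}"
        by (intro intc continuous_intros cw)
      fix s assume s: "s \<in> {0..t}"
      show "\<bar>g s\<bar> \<le> A t * (\<bar>\<mu>\<bar> * \<bar>w s\<bar> + \<bar>\<mu> - \<nu>\<bar>)"
      proof -
        have As: "0 \<le> A s" "A s \<le> A t" using Amono[of s t] Ann[of s] s by auto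
        have "\<bar>\<mu> * w s + (\<mu> - \<nu>) * v s\<bar> \<le> \<bar>\<mu>\<bar> * \<bar>w s\<bar> + \<bar>\<mu> - \<nu>\<bar> * \<bar>v s\<bar>"
          by (metis abs_mult abs_triangle_ineq)
        also have "\<dots> \<le> \<bar>\<mu>\<bar> * \<bar>w s\<bar> + \<bar>\<mu> - \<nu>\<bar>" using vb[of s] s
          by (simp add: mult_left_le)
        finally have h: "\<bar>\<mu> * w s + (\<mu> - \<nu>) * v s\<bar> \<le> \<bar>\<mu>\<bar> * \<bar>w s\<bar> + \<bar>\<mu> - \<nu>\<bar>" .
        have "\<bar>g s\<bar> = A s * \<bar>\<mu> * w s + (\<mu> - \<nu>) * v s\<bar>" using As by (simp add: g_def abs_mult)
        also have "\<dots> \<le> A t * (\<bar>\<mu>\<bar> * \<bar>w s\<bar> + \<bar>\<mu> - \<nu>\<bar>)"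
          using As h by (intro mult_mono) auto
        finally show "\<bar>g s\<bar> \<le> A t * (\<bar>\<mu>\<bar> * \<bar>w s\<bar> + \<bar>\<mu> - \<nu>\<bar>)" .
      qed
    qed
    also have "integral {0..t} (\<lambda>s. A t * (\<bar>\<mu>\<bar> * \<bar>w s\<bar> + \<bar>\<mu> - \<nu>\<bar>)) = A t * (\<bar>\<mu>\<bar> * J t + \<bar>\<mu> - \<nu>\<bar> * t)"
    proof -
      have "integral {0..t} (\<lambda>s. A t * (\<bar>\<mu>\<bar> * \<bar>w s\<bar> + \<bar>\<mu> - \<nu>\<bar>))
          = A t * (\<bar>\<mu>\<bar> * integral {0..t} (\<lambda>s. \<bar>w s\<bar>) + integral {0..t} (\<lambda>s. \<bar>\<mu> - \<nu>\<bar>))"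
      proof -
        have "integral {0..t} (\<lambda>s. \<bar>\<mu>\<bar> * \<bar>w s\<bar> + \<bar>\<mu> - \<nu>\<bar>) = integral {0..t} (\<lambda>s. \<bar>\<mu>\<bar> * \<bar>w s\<bar>) + integral {0..t} (\<lambda>s. \<bar>\<mu> - \<nu>\<bar>)"
          by (rule integral_add) (auto intro!: intc continuous_intros cw)
        then show ?thesis by simp
      qed
      then show ?thesis using t by (simp add: J_def mult.commute)
    qed
    finally have b: "\<bar>integral {0..t} g\<bar> \<le> A t * (\<bar>\<mu>\<bar> * J t + \<bar>\<mu> - \<nu>\<bar> * t)" .
    have "\<bar>A t * (deriv u t - deriv v t)\<bar> = \<bar>integral {0..t} g\<bar>" using e by simp
    then have "A t * \<bar>deriv u t - deriv v t\<bar> = \<bar>integral {0..t} g\<bar>" using Apos[OF t] by (simp add: abs_mult)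
    then have "A t * \<bar>deriv u t - deriv v t\<bar> \<le> A t * (\<bar>\<mu>\<bar> * J t + \<bar>\<mu> - \<nu>\<bar> * t)" using b by simp
    then show ?thesis using Apos[OF t] by (simp add: mult_le_cancel_left_pos)
  qed
  define a where "a = \<bar>\<mu> - \<nu>\<bar> * X\<^sup>2"
  define K where "K = X * \<bar>\<mu>\<bar> + 1"
  have K: "K > 0" using X by (simp add: K_def add_nonneg_pos)
  have a: "a \<ge> 0" by (simp add: a_def)
  have main: "\<bar>w x\<bar> \<le> a + K * integral {0..x} (\<lambda>s. \<bar>w s\<bar>)" if x: "x \<in> {0..X}" for x
  proof (cases "x = 0")
    case True then show ?thesis using a uv0 by (simp add: w_def)
  next
    case False
    then have x0: "0 < x" using x by auto
    have cwx: "continuous_on {0..x} w" by (rule continuous_on_subset[OF cw]) auto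
    have dwx: "\<And>y. 0 < y \<Longrightarrow> y < x \<Longrightarrow> w differentiable (at y)"
      unfolding w_def using du dv by (auto intro: differentiable_diff)
    obtain l z where lz: "0 < z" "z < x" "DERIV w z :> l" "w x - w 0 = (x - 0) * l"
      using MVT[OF x0 cwx dwx] by blast
    have "DERIV w z :> deriv u z - deriv v z" unfolding w_def using du[OF lz(1)] dv[OF lz(1)]
      by (intro DERIV_diff) (auto simp: DERIV_deriv_iff_real_differentiable)
    then have l: "l = deriv u z - deriv v z" using lz(3) by (rule DERIV_unique[rotated])
    have w0: "w 0 = 0" using uv0 by (simp add: w_def)
    have "\<bar>w x\<bar> = x * \<bar>l\<bar>" using lz(4) w0 x0 by (simp add: abs_mult)
    also have "\<dots> \<le> X * (\<bar>\<mu>\<bar> * J z + \<bar>\<mu> - \<nu>\<bar> * z)"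
      using wd[OF lz(1)] x x0 l by (intro mult_mono) (auto intro: add_nonneg_nonneg Jnn)
    also have "\<dots> \<le> X * (\<bar>\<mu>\<bar> * J x + \<bar>\<mu> - \<nu>\<bar> * X)"
      using Jmono[of z x] lz x X by (intro mult_left_mono add_mono mult_left_mono) auto
    also have "\<dots> = (X * \<bar>\<mu>\<bar>) * J x + a" by (simp add: a_def power2_eq_square algebra_simps)
    also have "\<dots> \<le> K * J x + a" using Jnn[of x] by (simp add: K_def algebra_simps)
    finally show ?thesis by (simp add: J_def)
  qed
  have "\<bar>w X\<bar> \<le> a * exp (K * X)"
    by (rule gronwall[where \<psi>="\<lambda>s. \<bar>w s\<bar>", OF _ K a main]) (use X in \<open>auto intro: continuous_on_subset[OF caw]\<close>)
  then show ?thesis by (simp add: w_def a_def K_def)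
qed

lemma phi_joint_cont:
  fixes A :: "real \<Rightarrow> real" and phi :: "real \<Rightarrow> real \<Rightarrow> real" and \<rho> :: real
  assumes Apos: "\<And>x. x > 0 \<Longrightarrow> A x > 0" and Ann: "\<And>x. x \<ge> 0 \<Longrightarrow> A x \<ge> 0"
    and Amono: "\<And>x y. 0 \<le> x \<Longrightarrow> x \<le> y \<Longrightarrow> A x \<le> A y"
    and Acont: "continuous_on {0..} A"
    and cphi: "\<And>l. continuous_on {0..} (phi l)" and p0: "\<And>l. phi l 0 = 1"
    and dphi: "\<And>l x. x > 0 \<Longrightarrow> phi l differentiable (at x)"
    and iphi: "\<And>l x. x > 0 \<Longrightarrow> A x * deriv (phi l) x = -(l\<^sup>2 + \<rho>\<^sup>2) * integral {0..x} (\<lambda>s. A s * phi l s)"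
    and bphi: "\<And>l x. x \<ge> 0 \<Longrightarrow> \<bar>phi l x\<bar> \<le> 1"
  shows "continuous_on (UNIV \<times> {0<..}) (\<lambda>z. phi (fst z) (snd z))"
  unfolding continuous_on_def
proof (intro ballI)
  fix z0 assume z0: "z0 \<in> (UNIV \<times> {0<..} :: (real \<times> real) set)"
  obtain l x where lx: "z0 = (l, x)" "x > 0" using z0 by auto
  define S where "S = (UNIV \<times> {0<..} :: (real \<times> real) set)"
  define \<mu> where "\<mu> = l\<^sup>2 + \<rho>\<^sup>2"
  define B1 where "B1 = (\<lambda>z::real\<times>real. \<bar>\<mu> - ((fst z)\<^sup>2 + \<rho>\<^sup>2)\<bar> * (snd z)\<^sup>2 * exp ((snd z * \<bar>\<mu>\<bar> + 1) * snd z))"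
  define B2 where "B2 = (\<lambda>z::real\<times>real. \<bar>phi l (snd z) - phi l x\<bar>)"
  have bound: "\<bar>phi (fst z) (snd z) - phi l x\<bar> \<le> B1 z + B2 z" if "z \<in> S" for z
  proof -
    have sz: "snd z > 0" using that by (auto simp: S_def)
    have "\<bar>phi l (snd z) - phi (fst z) (snd z)\<bar> \<le> B1 z" unfolding B1_def \<mu>_def
      by (rule phi_diff_bound[OF Apos Ann Amono Acont cphi cphi _ dphi dphi iphi iphi bphi sz])
         (auto simp: p0)
    then show ?thesis unfolding B2_def by linarith
  qed
  have t1: "(B1 \<longlongrightarrow> 0) (at z0 within S)"
  proof -
    have "(B1 \<longlongrightarrow> B1 z0) (at z0 within S)" unfolding B1_def
      by (intro tendsto_intros)
    moreover have "B1 z0 = 0" by (simp add: B1_def lx \<mu>_def)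
    ultimately show ?thesis by simp
  qed
  have t2: "(B2 \<longlongrightarrow> 0) (at z0 within S)"
  proof -
    have "continuous_on S (\<lambda>z. phi l (snd z))"
      by (rule continuous_on_compose2[OF cphi[of l] continuous_on_snd]) (auto simp: S_def)
    then have "((\<lambda>z. phi l (snd z)) \<longlongrightarrow> phi l (snd z0)) (at z0 within S)"
      using lx unfolding continuous_on_def S_def by auto
    then have "((\<lambda>z. phi l (snd z) - phi l x) \<longlongrightarrow> 0) (at z0 within S)"
      using lx by (simp add: LIM_zero)
    then show ?thesis unfolding B2_def by (rule tendsto_rabs_zero)
  qed
  have "((\<lambda>z. phi (fst z) (snd z) - phi l x) \<longlongrightarrow> 0) (at z0 within S)"
  proof (rule Lim_null_comparison)
    show "\<forall>\<^sub>F z in at z0 within S. norm (phi (fst z) (snd z) - phi l x) \<le> B1 z + B2 z"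
      using bound by (auto simp: eventually_at_filter)
    show "((\<lambda>z. B1 z + B2 z) \<longlongrightarrow> 0) (at z0 within S)" using tendsto_add[OF t1 t2] by simp
  qed
  then show "((\<lambda>z. phi (fst z) (snd z)) \<longlongrightarrow> phi (fst z0) (snd z0)) (at z0 within UNIV \<times> {0<..})"
    using lx by (simp add: LIM_zero_iff S_def)
qed

lemma phi_meas:
  fixes phi :: "real \<Rightarrow> real \<Rightarrow> real"
  assumes "continuous_on (UNIV \<times> {0<..}) (\<lambda>z. phi (fst z) (snd z))"
  shows "(\<lambda>z. indicator (UNIV \<times> {0<..}) z * phi (fst z) (snd z)) \<in> borel_measurable (lborel \<Otimes>\<^sub>M lborel)"
proof -
  have "(\<lambda>z. indicator (UNIV \<times> {0<..}) z *\<^sub>R phi (fst z) (snd z)) \<in> borel_measurable borel"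
    by (rule borel_measurable_continuous_on_indicator[OF _ assms]) (intro borel_open open_Times, auto)
  then show ?thesis by (simp add: lborel_prod)
qed

lemma Lp_w_meas:
  assumes "Lp_w p W f" shows "(\<lambda>x. indicator {0<..} x *\<^sub>R f x) \<in> borel_measurable lborel"
  using assms unfolding Lp_w_def set_borel_measurable_def by simp

lemma meas_restr:
  fixes g :: "real \<Rightarrow> 'b::real_normed_vector"
  assumes "continuous_on {0..} g"
  shows "(\<lambda>x. indicator {0<..} x *\<^sub>R g x) \<in> borel_measurable lborel"
proof -
  have "continuous_on {0<..} g" by (rule continuous_on_subset[OF assms]) auto
  from borel_measurable_continuous_on_indicator[OF _ this] show ?thesis by simp
qed

lemma FT_integrable:
  fixes A :: "real \<Rightarrow> real" and phi :: "real \<Rightarrow> real \<Rightarrow> real" and f :: "real \<Rightarrow> complex"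
  assumes Ann: "\<And>x. x \<ge> 0 \<Longrightarrow> A x \<ge> 0" and Acont: "continuous_on {0..} A"
    and cphi: "continuous_on {0..} (phi l)"
    and bphi: "\<And>x. x \<ge> 0 \<Longrightarrow> \<bar>phi l x\<bar> \<le> 1"
    and f: "Lp_w 1 A f"
  shows "set_integrable lborel {0<..} (\<lambda>x. f x * complex_of_real (phi l x * A x))"
proof -
  have fm: "(\<lambda>x. indicator {0<..} x *\<^sub>R f x) \<in> borel_measurable lborel" by (rule Lp_w_meas[OF f])
  have pm: "(\<lambda>x. indicator {0<..} x *\<^sub>R phi l x) \<in> borel_measurable lborel"
    by (rule meas_restr[OF cphi])
  have am: "(\<lambda>x. indicator {0<..} x *\<^sub>R A x) \<in> borel_measurable lborel"
    by (rule meas_restr[OF Acont])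
  have eq: "(\<lambda>x. indicator {0<..} x *\<^sub>R (f x * complex_of_real (phi l x * A x)))
     = (\<lambda>x. (indicator {0<..} x *\<^sub>R f x) * complex_of_real ((indicator {0<..} x *\<^sub>R phi l x) * (indicator {0<..} x *\<^sub>R A x)))"
    by (auto simp: fun_eq_iff indicator_def)
  have meas: "(\<lambda>x. indicator {0<..} x *\<^sub>R (f x * complex_of_real (phi l x * A x))) \<in> borel_measurable lborel"
    unfolding eq using fm pm am by measurable
  have "(\<integral>\<^sup>+ x. ennreal (norm (indicator {0<..} x *\<^sub>R (f x * complex_of_real (phi l x * A x)))) \<partial>lborel)
       \<le> (\<integral>\<^sup>+ x\<in>{0<..}. ennreal (cmod (f x) powr 1 * A x) \<partial>lborel)"
  proof (intro nn_integral_mono)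
    fix x
    show "ennreal (norm (indicator {0<..} x *\<^sub>R (f x * complex_of_real (phi l x * A x))))
       \<le> ennreal (cmod (f x) powr 1 * A x) * indicator {0<..} x"
    proof (cases "x > 0")
      case True
      have "cmod (f x) * (\<bar>phi l x\<bar> * \<bar>A x\<bar>) \<le> cmod (f x) * A x"
        using bphi[of x] Ann[of x] True by (intro mult_left_mono) (auto simp: mult_left_le_one_le)
      then show ?thesis using True by (auto simp: norm_mult abs_mult intro!: ennreal_leI)
    qed auto
  qed
  also have "\<dots> < \<infinity>" using f by (simp add: Lp_w_def)
  finally show ?thesis unfolding set_integrable_def
    by (subst integrable_iff_bounded) (use meas in auto)
qed

lemma FT_measurable:
  fixes A :: "real \<Rightarrow> real" and phi :: "real \<Rightarrow> real \<Rightarrow> real" and f :: "real \<Rightarrow> complex"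
  assumes Acont: "continuous_on {0..} A"
    and jc: "continuous_on (UNIV \<times> {0<..}) (\<lambda>z. phi (fst z) (snd z))"
    and f: "Lp_w p A f"
  shows "FT A phi f \<in> borel_measurable lborel"
proof -
  have fm: "(\<lambda>x. indicator {0<..} x *\<^sub>R f x) \<in> borel_measurable lborel" by (rule Lp_w_meas[OF f])
  have am: "(\<lambda>x. indicator {0<..} x *\<^sub>R A x) \<in> borel_measurable lborel"
    by (rule meas_restr[OF Acont])
  have pm: "(\<lambda>z. indicator (UNIV \<times> {0<..}) z * phi (fst z) (snd z)) \<in> borel_measurable (lborel \<Otimes>\<^sub>M lborel)"
    by (rule phi_meas[OF jc])
  define F where "F = (\<lambda>l x. (indicator {0<..} x *\<^sub>R f x) * complex_of_real
      ((indicator (UNIV \<times> {0<..}) (l, x) * phi l x) * (indicator {0<..} x *\<^sub>R A x)))"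
  have Fm: "case_prod F \<in> borel_measurable (lborel \<Otimes>\<^sub>M lborel)"
  proof -
    have "case_prod F = (\<lambda>z. (indicator {0<..} (snd z) *\<^sub>R f (snd z)) * complex_of_real
      ((indicator (UNIV \<times> {0<..}) z * phi (fst z) (snd z)) * (indicator {0<..} (snd z) *\<^sub>R A (snd z))))"
      by (auto simp: F_def fun_eq_iff)
    also have "\<dots> \<in> borel_measurable (lborel \<Otimes>\<^sub>M lborel)"
      using fm am pm by measurable
    finally show ?thesis .
  qed
  have "(\<lambda>l. \<integral>x. F l x \<partial>lborel) \<in> borel_measurable lborel"
    by (rule lborel.borel_measurable_lebesgue_integral[OF Fm])
  moreover have "FT A phi f = (\<lambda>l. \<integral>x. F l x \<partial>lborel)"
    unfolding FT_def set_lebesgue_integral_def F_def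
    by (intro ext Bochner_Integration.integral_cong) (auto simp: indicator_def)
  ultimately show ?thesis by simp
qed

lemma FT_add:
  fixes A :: "real \<Rightarrow> real" and phi :: "real \<Rightarrow> real \<Rightarrow> real" and f g :: "real \<Rightarrow> complex"
  assumes "set_integrable lborel {0<..} (\<lambda>x. f x * complex_of_real (phi l x * A x))"
    and "set_integrable lborel {0<..} (\<lambda>x. g x * complex_of_real (phi l x * A x))"
  shows "FT A phi (\<lambda>x. f x + g x) l = FT A phi f l + FT A phi g l"
  unfolding FT_def using set_integral_add(2)[OF assms] by (simp add: distrib_right)

lemma layer_powr:
  fixes s p :: real
  assumes s: "s \<ge> 0" and p: "p > 0"
  shows "ennreal (s powr p) = (\<integral>\<^sup>+ t. ennreal (p * t powr (p-1)) * indicator {0<..} t * indicator {..s} t \<partial>lborel)"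
proof -
  have "((\<lambda>t. t powr (p-1)) has_integral (s powr (p - 1 + 1) / (p - 1 + 1))) {0..s}"
    by (rule has_integral_powr_from_0) (use p s in auto)
  then have "((\<lambda>t. p * t powr (p-1)) has_integral p * (s powr p / p)) {0..s}"
    by (intro has_integral_mult_right) simp
  then have h: "((\<lambda>t. p * t powr (p-1)) has_integral s powr p) {0..s}" using p by simp
  have "(\<integral>\<^sup>+ t. ennreal (p * t powr (p-1)) * indicator {0..s} t \<partial>lborel) = ennreal (s powr p)"
    by (rule nn_integral_has_integral_lebesgue'[OF _ h]) (use p in auto)
  moreover have "(\<integral>\<^sup>+ t. ennreal (p * t powr (p-1)) * indicator {0..s} t \<partial>lborel)
      = (\<integral>\<^sup>+ t. ennreal (p * t powr (p-1)) * indicator {0<..} t * indicator {..s} t \<partial>lborel)"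
    by (intro nn_integral_cong) (auto simp: indicator_def)
  ultimately show ?thesis by simp
qed

lemma inner_lower:
  fixes a p :: real
  assumes a: "a \<ge> 0" and p: "p > 1"
  shows "(\<integral>\<^sup>+ t. ennreal (t powr (p-2)) * indicator {0<..} t * indicator {..<a} t \<partial>lborel) \<le> ennreal (a powr (p-1) / (p-1))"
proof -
  have "((\<lambda>t. t powr (p-2)) has_integral (a powr (p - 2 + 1) / (p - 2 + 1))) {0..a}"
    by (rule has_integral_powr_from_0) (use p a in auto)
  then have h: "((\<lambda>t. t powr (p-2)) has_integral (a powr (p - 1) / (p - 1))) {0..a}"
    by (simp add: algebra_simps)
  have "(\<integral>\<^sup>+ t. ennreal (t powr (p-2)) * indicator {0<..} t * indicator {..<a} t \<partial>lborel)
      \<le> (\<integral>\<^sup>+ t. ennreal (t powr (p-2)) * indicator {0..a} t \<partial>lborel)"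
    by (intro nn_integral_mono) (auto simp: indicator_def)
  also have "\<dots> = ennreal (a powr (p-1) / (p-1))"
    by (rule nn_integral_has_integral_lebesgue'[OF _ h]) auto
  finally show ?thesis .
qed

lemma inner_upper:
  fixes a p :: real
  assumes a: "a > 0" and p: "p < 2"
  shows "(\<integral>\<^sup>+ t. ennreal (t powr (p-3)) * indicator {0<..} t * indicator {a..} t \<partial>lborel) \<le> ennreal (a powr (p-2) / (2-p))"
proof -
  have "((\<lambda>t. t powr (p-3)) has_integral -(a powr (p - 3 + 1)) / (p - 3 + 1)) {a..}"
    by (rule has_integral_powr_to_inf) (use p a in auto)
  then have h: "((\<lambda>t. t powr (p-3)) has_integral (a powr (p-2) / (2-p))) {a..}"
    by (simp add: algebra_simps minus_divide_right)
  have "(\<integral>\<^sup>+ t. ennreal (t powr (p-3)) * indicator {0<..} t * indicator {a..} t \<partial>lborel)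
      \<le> (\<integral>\<^sup>+ t. ennreal (t powr (p-3)) * indicator {a..} t \<partial>lborel)"
    by (intro nn_integral_mono) (auto simp: indicator_def)
  also have "\<dots> = ennreal (a powr (p-2) / (2-p))"
    by (rule nn_integral_has_integral_lebesgue'[OF _ h]) auto
  finally show ?thesis .
qed

lemma tail_powr:
  fixes b e :: real
  assumes b: "b > 0" and e: "e > 1"
  shows "(\<integral>\<^sup>+ x. ennreal (x powr (-e)) * indicator {b..} x \<partial>lborel) = ennreal (b powr (1-e) / (e-1))"
proof -
  have "((\<lambda>x. x powr (-e)) has_integral -(b powr (-e + 1)) / (-e + 1)) {b..}"
    by (rule has_integral_powr_to_inf) (use b e in auto)
  then have h: "((\<lambda>x. x powr (-e)) has_integral (b powr (1-e) / (e-1))) {b..}"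
    by (simp add: algebra_simps minus_divide_right)
  show ?thesis by (rule nn_integral_has_integral_lebesgue'[OF _ h]) auto
qed

lemma powr_root_le:
  fixes x b e :: real
  assumes "x > 0" "e > 0" "b \<le> x powr e" "b \<ge> 0"
  shows "b powr (1/e) \<le> x"
proof -
  have "b powr (1/e) \<le> (x powr e) powr (1/e)" by (rule powr_mono2) (use assms in auto)
  also have "\<dots> = x" using assms by (simp add: powr_powr)
  finally show ?thesis .
qed

lemma weak_gw:
  fixes \<alpha> \<rho> k k2 c t :: real and W :: "real \<Rightarrow> real"
  assumes \<alpha>: "\<alpha> > -1/2" and k2: "k2 \<ge> 0"
    and cases: "(\<rho> = 0 \<and> \<alpha> > 0) \<or> \<rho> > 0"
    and Wb1: "\<rho> = 0 \<and> \<alpha> > 0 \<Longrightarrow> \<forall>l. W l \<le> k2 * \<bar>l\<bar> powr (2*\<alpha>+1)"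
    and Wb2: "\<rho> > 0 \<Longrightarrow> (\<forall>l. \<bar>l\<bar> > k \<longrightarrow> W l \<le> k2 * \<bar>l\<bar> powr (2*\<alpha>+1)) \<and> (\<forall>l. \<bar>l\<bar> \<le> k \<longrightarrow> W l \<le> k2 * l\<^sup>2)"
    and Wnn: "\<And>x. W x \<ge> 0"
    and c: "c \<ge> 0" and t: "t > 0"
  shows "(\<integral>\<^sup>+ x\<in>{0<..}. ennreal (W x / (gw \<alpha> \<rho> k x)\<^sup>2) * indicator {x. t \<le> gw \<alpha> \<rho> k x * c} x \<partial>lborel)
     \<le> ennreal (k2 * (1/(2*\<alpha>+2) + 1/3) * c / t)"
proof (cases "c = 0")
  case True
  then show ?thesis using t by (simp add: indicator_def)
next
  case False
  then have cpos: "c > 0" using c by simp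
  define b where "b = t / c"
  have b: "b > 0" using t cpos by (simp add: b_def)
  define e1 where "e1 = 2*\<alpha>+3"
  have e1: "e1 > 1" using \<alpha> by (simp add: e1_def)
  define b1 where "b1 = b powr (1/(2*\<alpha>+2))"
  define b2 where "b2 = b powr (1/3)"
  have b1: "b1 > 0" and b2: "b2 > 0" using b by (auto simp: b1_def b2_def)
  have pw: "ennreal (W x / (gw \<alpha> \<rho> k x)\<^sup>2) * indicator {x. t \<le> gw \<alpha> \<rho> k x * c} x * indicator {0<..} x
      \<le> ennreal k2 * (ennreal (x powr (-e1)) * indicator {b1..} x) + ennreal k2 * (ennreal (x powr (-4)) * indicator {b2..} x)" for x
  proof (cases "x > 0 \<and> t \<le> gw \<alpha> \<rho> k x * c")
    case False
    then show ?thesis by (auto simp: indicator_def)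
  next
    case True
    then have x: "x > 0" and tg: "t \<le> gw \<alpha> \<rho> k x * c" by auto
    have bg: "b \<le> gw \<alpha> \<rho> k x" using tg cpos by (simp add: b_def divide_le_eq)
    show ?thesis
    proof (cases "\<rho> = 0 \<or> x > k")
      case True
      have g: "gw \<alpha> \<rho> k x = x powr (2*\<alpha>+2)" using True by (auto simp: gw_def algebra_simps)
      have Wx0: "W x \<le> k2 * \<bar>x\<bar> powr (2*\<alpha>+1)"
      proof (cases "\<rho> = 0")
        case r0: True
        then have "\<rho> = 0 \<and> \<alpha> > 0" using cases by auto
        then show ?thesis using Wb1 by blast
      next
        case r0: False
        then have "\<rho> > 0" "x > k" using cases True by auto
        then have "\<forall>l. \<bar>l\<bar> > k \<longrightarrow> W l \<le> k2 * \<bar>l\<bar> powr (2*\<alpha>+1)" using Wb2 by blast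
        moreover have "\<bar>x\<bar> > k" using \<open>x > k\<close> x by simp
        ultimately show ?thesis by blast
      qed
      have Wx: "W x \<le> k2 * x powr (2*\<alpha>+1)" using Wx0 x by simp
      have "W x / (gw \<alpha> \<rho> k x)\<^sup>2 \<le> k2 * x powr (2*\<alpha>+1) / (x powr (2*\<alpha>+2))\<^sup>2"
        unfolding g using Wx x by (intro divide_right_mono) auto
      also have "\<dots> = k2 * x powr (-e1)"
      proof -
        have sq: "(x powr (2*\<alpha>+2))\<^sup>2 = x powr (2*\<alpha>+2 + (2*\<alpha>+2))" by (simp only: power2_eq_square powr_add[symmetric])
        have "x powr (2*\<alpha>+1) / (x powr (2*\<alpha>+2))\<^sup>2 = x powr (2*\<alpha>+1) / x powr (2*\<alpha>+2 + (2*\<alpha>+2))"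
          by (simp only: sq)
        also have "\<dots> = x powr (2*\<alpha>+1 - (2*\<alpha>+2 + (2*\<alpha>+2)))" by (rule powr_diff[symmetric])
        also have "2*\<alpha>+1 - (2*\<alpha>+2 + (2*\<alpha>+2)) = -e1" by (simp add: e1_def)
        finally show ?thesis by (metis times_divide_eq_right)
      qed
      finally have w: "W x / (gw \<alpha> \<rho> k x)\<^sup>2 \<le> k2 * x powr (-e1)" .
      have "b1 \<le> x" unfolding b1_def by (rule powr_root_le[OF x _ bg[unfolded g]]) (use \<alpha> b in simp_all)
      then show ?thesis using w x tg k2 by (auto simp: indicator_def ennreal_mult''[symmetric] intro!: ennreal_leI add_increasing2)
    next
      case False
      then have r: "\<rho> > 0" "x \<le> k" using cases by auto
      have g: "gw \<alpha> \<rho> k x = x ^ 3" using False by (auto simp: gw_def)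
      have Wx: "W x \<le> k2 * x\<^sup>2" using Wb2 r x by auto
      have "W x / (gw \<alpha> \<rho> k x)\<^sup>2 \<le> k2 * x\<^sup>2 / (x ^ 3)\<^sup>2"
        unfolding g using Wx x by (intro divide_right_mono) auto
      also have "\<dots> = k2 * x powr (-4)"
        using x by (simp add: powr_minus power_numeral_reduce powr_realpow[symmetric] field_simps)
      finally have w: "W x / (gw \<alpha> \<rho> k x)\<^sup>2 \<le> k2 * x powr (-4)" .
      have "b \<le> x powr 3" using bg x by (simp add: g)
      then have "b2 \<le> x" unfolding b2_def using b by (intro powr_root_le[OF x]) auto
      then show ?thesis using w x tg k2 by (auto simp: indicator_def ennreal_mult''[symmetric] intro!: ennreal_leI add_increasing)
    qed
  qed
  have eq1: "b1 powr (1-e1) = c / t"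
  proof -
    have "b1 powr (1-e1) = b powr (1/(2*\<alpha>+2) * (1 - e1))" by (simp add: b1_def powr_powr)
    also have "1/(2*\<alpha>+2) * (1 - e1) = -1" using \<alpha> by (simp add: e1_def field_simps)
    finally show ?thesis using b c t by (simp add: b_def powr_minus)
  qed
  have eq2: "b2 powr (1-4) = c / t"
  proof -
    have "b2 powr (1-4) = b powr (1/3 * (1 - 4))" by (simp add: b2_def powr_powr)
    then show ?thesis using b c t by (simp add: b_def powr_minus)
  qed
  have "(\<integral>\<^sup>+ x\<in>{0<..}. ennreal (W x / (gw \<alpha> \<rho> k x)\<^sup>2) * indicator {x. t \<le> gw \<alpha> \<rho> k x * c} x \<partial>lborel)
     \<le> (\<integral>\<^sup>+ x. ennreal k2 * (ennreal (x powr (-e1)) * indicator {b1..} x) + ennreal k2 * (ennreal (x powr (-4)) * indicator {b2..} x) \<partial>lborel)"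
    by (intro nn_integral_mono) (use pw in auto)
  also have "\<dots> = ennreal k2 * ennreal (b1 powr (1-e1) / (e1-1)) + ennreal k2 * ennreal (b2 powr (1-4) / (4-1))"
    by (subst nn_integral_add) (auto simp: nn_integral_cmult tail_powr[OF b1 e1] tail_powr[OF b2])
  also have "\<dots> = ennreal k2 * ennreal (c / t / (e1 - 1)) + ennreal k2 * ennreal (c / t / (4 - 1))"
    by (simp only: eq1 eq2)
  also have "ennreal k2 * ennreal (c / t / (e1 - 1)) + ennreal k2 * ennreal (c / t / (4 - 1))
      = ennreal (k2 * (1/(2*\<alpha>+2) + 1/3) * c / t)"
  proof -
    have rr: "k2 * (c / t / (e1 - 1)) + k2 * (c / t / (4 - 1)) = k2 * (1/(2*\<alpha>+2) + 1/3) * c / t"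
    proof -
      have gen: "k2 * (c / t / q) + k2 * (c / t / (4 - 1)) = k2 * (1/q + 1/3) * c / t" if "q \<noteq> 0" for q
        using that t by (simp add: field_simps)
      have e: "e1 - 1 = 2*\<alpha>+2" by (simp add: e1_def)
      have "2*\<alpha>+2 \<noteq> 0" using \<alpha> by simp
      then show ?thesis unfolding e by (rule gen)
    qed
    have X0: "c / t / (e1 - 1) \<ge> 0" "c / t / (4 - 1) \<ge> 0" using e1 c t by auto
    have "ennreal k2 * ennreal (c / t / (e1 - 1)) + ennreal k2 * ennreal (c / t / (4 - 1))
       = ennreal (k2 * (c / t / (e1 - 1))) + ennreal (k2 * (c / t / (4 - 1)))"
      unfolding ennreal_mult[symmetric, OF k2 X0(1)] ennreal_mult[symmetric, OF k2 X0(2)] ..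
    also have "\<dots> = ennreal (k2 * (c / t / (e1 - 1)) + k2 * (c / t / (4 - 1)))"
      by (rule ennreal_plus[symmetric]; intro mult_nonneg_nonneg k2 X0)
    also have "\<dots> = ennreal (k2 * (1/(2*\<alpha>+2) + 1/3) * c / t)" by (simp only: rr)
    finally show ?thesis .
  qed
  finally show ?thesis .
qed

lemma powr_rearr:
  fixes g a p w :: real
  assumes "g > 0" "a \<ge> 0"
  shows "g powr (p-2) * a powr p * w = w / g\<^sup>2 * (g * a) powr p"
proof -
  have "(g * a) powr p = g powr p * a powr p" using assms by (simp add: powr_mult)
  moreover have "g powr (p-2) = g powr p / g\<^sup>2" using assms by (simp add: powr_diff)
  ultimately show ?thesis using assms by (simp add: field_simps)
qed

lemma powr_tdiv:
  fixes t p :: real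
  assumes "t > 0"
  shows "t powr (p-1) / t = t powr (p-2)" "t powr (p-1) / t\<^sup>2 = t powr (p-3)"
proof -
  have "t powr (p-1) / t = t powr (p-1) / t powr 1" using assms by simp
  also have "\<dots> = t powr ((p-1) - 1)" by (rule powr_diff[symmetric])
  also have "\<dots> = t powr (p-2)" by simp
  finally show "t powr (p-1) / t = t powr (p-2)" .
  have "t powr (p-1) / t\<^sup>2 = t powr (p-1) / t powr 2" using assms by simp
  also have "\<dots> = t powr ((p-1) - 2)" by (rule powr_diff[symmetric])
  also have "\<dots> = t powr (p-3)" by simp
  finally show "t powr (p-1) / t\<^sup>2 = t powr (p-3)" .
qed

lemma powr_mul_add:
  fixes a p q :: real
  assumes "a \<ge> 0" "p + q \<noteq> 0 \<or> a > 0"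
  shows "a powr p * a powr q = a powr (p + q)"
  using assms by (cases "a = 0") (auto simp: powr_add)

locale marc =
  fixes FTo :: "(real \<Rightarrow> complex) \<Rightarrow> real \<Rightarrow> complex" and Aw W G :: "real \<Rightarrow> real" and p C1 :: real
  assumes p1: "1 < p" and p2: "p < 2" and C1: "C1 \<ge> 0"
    and Awm[measurable]: "Aw \<in> borel_measurable lborel" and Awnn: "\<And>x. Aw x \<ge> 0"
    and Wm[measurable]: "W \<in> borel_measurable lborel" and Wnn: "\<And>x. W x \<ge> 0"
    and Gm[measurable]: "G \<in> borel_measurable lborel" and Gpos: "\<And>x. x > 0 \<Longrightarrow> G x > 0"
    and H1: "\<And>f. f \<in> borel_measurable lborel \<Longrightarrow> Lp_w 1 Aw f \<Longrightarrow> FTo f \<in> borel_measurable lborel"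
    and H2: "\<And>f l. Lp_w 1 Aw f \<Longrightarrow> ennreal (cmod (FTo f l)) \<le> normp_w 1 Aw f"
    and H3: "\<And>f. Lp_w 1 Aw f \<Longrightarrow> Lp_w 2 Aw f \<Longrightarrow> normp_w 2 W (FTo f) \<le> normp_w 2 Aw f"
    and H4: "\<And>f g l. Lp_w 1 Aw f \<Longrightarrow> Lp_w 1 Aw g \<Longrightarrow> FTo (\<lambda>x. f x + g x) l = FTo f l + FTo g l"
    and H5: "\<And>c t. c \<ge> 0 \<Longrightarrow> t > 0 \<Longrightarrow>
      (\<integral>\<^sup>+ x\<in>{0<..}. ennreal (W x / (G x)\<^sup>2) * indicator {x. t \<le> G x * c} x \<partial>lborel) \<le> ennreal (C1 * c / t)"
begin

lemma Lp1_mono: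
  assumes [measurable]: "g \<in> borel_measurable lborel" and f: "Lp_w 1 Aw f" and le: "\<And>x. cmod (g x) \<le> cmod (f x)"
  shows "Lp_w 1 Aw g"
  unfolding Lp_w_def set_borel_measurable_def
proof
  show "(\<lambda>x. indicator {0<..} x *\<^sub>R g x) \<in> borel_measurable lborel" by measurable
  have "(\<integral>\<^sup>+ x\<in>{0<..}. ennreal (cmod (g x) powr 1 * Aw x) \<partial>lborel) \<le> (\<integral>\<^sup>+ x\<in>{0<..}. ennreal (cmod (f x) powr 1 * Aw x) \<partial>lborel)"
    using le Awnn by (intro nn_integral_mono) (auto simp: indicator_def intro!: ennreal_leI mult_right_mono)
  also have "\<dots> < \<infinity>" using f by (simp add: Lp_w_def)
  finally show "(\<integral>\<^sup>+ x\<in>{0<..}. ennreal (cmod (g x) powr 1 * Aw x) \<partial>lborel) < \<infinity>" .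
qed

lemma Lp2_trunc:
  assumes [measurable]: "f \<in> borel_measurable lborel" and fp: "Lp_w p Aw f" and t: "t > 0"
  shows "Lp_w 2 Aw (\<lambda>x. if t < cmod (f x) then 0 else f x)"
  unfolding Lp_w_def set_borel_measurable_def
proof
  show "(\<lambda>x. indicator {0<..} x *\<^sub>R (if t < cmod (f x) then 0 else f x)) \<in> borel_measurable lborel" by measurable
  have "(\<integral>\<^sup>+ x\<in>{0<..}. ennreal (cmod (if t < cmod (f x) then 0 else f x) powr 2 * Aw x) \<partial>lborel)
      \<le> (\<integral>\<^sup>+ x\<in>{0<..}. ennreal (t powr (2-p)) * ennreal (cmod (f x) powr p * Aw x) \<partial>lborel)"
  proof (intro nn_integral_mono)
    fix x
    show "ennreal (cmod (if t < cmod (f x) then 0 else f x) powr 2 * Aw x) * indicator {0<..} x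
       \<le> ennreal (t powr (2-p)) * ennreal (cmod (f x) powr p * Aw x) * indicator {0<..} x"
    proof (cases "t < cmod (f x)")
      case True then show ?thesis by simp
    next
      case False
      define a where "a = cmod (f x)"
      have a: "a \<ge> 0" "a \<le> t" using False by (auto simp: a_def)
      have "a powr 2 = a powr (2-p) * a powr p" using a by (simp add: powr_mul_add)
      also have "\<dots> \<le> t powr (2-p) * a powr p" using a p2 by (intro mult_right_mono powr_mono2) auto
      finally have "a powr 2 * Aw x \<le> t powr (2-p) * a powr p * Aw x" using Awnn[of x] by (intro mult_right_mono)
      then have "ennreal (a powr 2 * Aw x) \<le> ennreal (t powr (2-p) * (a powr p * Aw x))"
        by (intro ennreal_leI) (simp add: mult.assoc)
      also have "\<dots> = ennreal (t powr (2-p)) * ennreal (a powr p * Aw x)"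
        by (rule ennreal_mult) (use Awnn[of x] in auto)
      finally have *: "ennreal (a powr 2 * Aw x) \<le> ennreal (t powr (2-p)) * ennreal (a powr p * Aw x)" .
      show ?thesis
      proof (cases "x > 0")
        case True then show ?thesis using False * by (simp add: a_def)
      qed simp

    qed
  qed
  also have "\<dots> = ennreal (t powr (2-p)) * normp_w p Aw f"
    unfolding normp_w_def by (subst nn_integral_cmult[symmetric]) (auto simp: mult.assoc)
  also have "\<dots> < \<infinity>" using fp by (simp add: Lp_w_def normp_w_def ennreal_mult_less_top)
  finally show "(\<integral>\<^sup>+ x\<in>{0<..}. ennreal (cmod (if t < cmod (f x) then 0 else f x) powr 2 * Aw x) \<partial>lborel) < \<infinity>" .
qed

lemma E_bound:
  assumes [measurable]: "f \<in> borel_measurable lborel" and f1: "Lp_w 1 Aw f" and fp: "Lp_w p Aw f" and t: "t > 0"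
  shows "(\<integral>\<^sup>+ x. ennreal (W x / (G x)\<^sup>2) * indicator {0<..} x * (if t \<le> G x * cmod (FTo f x) then 1 else 0) \<partial>lborel)
     \<le> ennreal (2*C1/t) * normp_w 1 Aw (\<lambda>x. if t < cmod (f x) then f x else 0)
       + ennreal (4/t\<^sup>2) * normp_w 2 Aw (\<lambda>x. if t < cmod (f x) then 0 else f x)"
proof -
  define g1 where "g1 = (\<lambda>x. if t < cmod (f x) then f x else 0)"
  define g2 where "g2 = (\<lambda>x. if t < cmod (f x) then 0 else f x)"
  have [measurable]: "g1 \<in> borel_measurable lborel" "g2 \<in> borel_measurable lborel"
    unfolding g1_def g2_def by measurable
  have L1: "Lp_w 1 Aw g1" by (rule Lp1_mono[OF _ f1]) (auto simp: g1_def)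
  have L2: "Lp_w 1 Aw g2" by (rule Lp1_mono[OF _ f1]) (auto simp: g2_def)
  have L22: "Lp_w 2 Aw g2" unfolding g2_def by (rule Lp2_trunc[OF _ fp t]) simp
  have fsum: "(\<lambda>x. g1 x + g2 x) = f" by (auto simp: g1_def g2_def)
  have Tsum: "FTo f y = FTo g1 y + FTo g2 y" for y using H4[OF L1 L2, of y] fsum by simp
  define T2 where "T2 = FTo g2"
  have [measurable]: "FTo f \<in> borel_measurable lborel" "T2 \<in> borel_measurable lborel"
    using H1[OF _ f1] H1[OF _ L2] by (auto simp: T2_def)
  have N1fin: "normp_w 1 Aw g1 < \<infinity>" using L1 by (simp add: Lp_w_def normp_w_def)
  define n1 where "n1 = enn2real (normp_w 1 Aw g1)"
  have N1eq: "normp_w 1 Aw g1 = ennreal n1" using N1fin by (simp add: n1_def less_top)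
  have n1: "n1 \<ge> 0" by (simp add: n1_def)
  have T1b: "cmod (FTo g1 y) \<le> n1" for y using H2[OF L1, of y] N1eq n1 by (simp add: ennreal_le_iff)
  have pw: "ennreal (W x / (G x)\<^sup>2) * indicator {0<..} x * (if t \<le> G x * cmod (FTo f x) then 1 else 0)
      \<le> ennreal (W x / (G x)\<^sup>2) * indicator {x. t/2 \<le> G x * n1} x * indicator {0<..} x
        + ennreal (4/t\<^sup>2) * (ennreal (cmod (T2 x) powr 2 * W x) * indicator {0<..} x)" for x
  proof (cases "x > 0 \<and> t \<le> G x * cmod (FTo f x)")
    case False then show ?thesis by (auto simp: indicator_def)
  next
    case True
    then have x: "x > 0" and tT: "t \<le> G x * cmod (FTo f x)" by auto
    have Gx: "G x > 0" using Gpos[OF x] .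
    have "G x * cmod (FTo f x) \<le> G x * (cmod (FTo g1 x) + cmod (T2 x))"
      using Gx unfolding Tsum T2_def by (intro mult_left_mono norm_triangle_ineq) auto
    also have "\<dots> \<le> G x * (n1 + cmod (T2 x))" using Gx T1b[of x] by (intro mult_left_mono) auto
    finally have le: "t \<le> G x * n1 + G x * cmod (T2 x)" using tT by (simp add: distrib_left)
    show ?thesis
    proof (cases "t/2 \<le> G x * n1")
      case True then show ?thesis using x by (simp add: indicator_def)
    next
      case False
      define c where "c = cmod (T2 x)"
      have c: "c \<ge> 0" by (simp add: c_def)
      have tc: "t \<le> 2 * G x * c" using le False by (simp add: c_def)
      have "t\<^sup>2 \<le> (2 * G x * c)\<^sup>2" using t tc by (intro power_mono) auto
      then have one: "1 \<le> (2 * G x * c)\<^sup>2 / t\<^sup>2" using t by simp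
      have "W x / (G x)\<^sup>2 = W x / (G x)\<^sup>2 * 1" by simp
      also have "\<dots> \<le> W x / (G x)\<^sup>2 * ((2 * G x * c)\<^sup>2 / t\<^sup>2)"
        using one Wnn[of x] by (intro mult_left_mono) auto
      also have "\<dots> = 4/t\<^sup>2 * (c\<^sup>2 * W x)" using Gx t by (simp add: field_simps power2_eq_square)
      finally have r: "W x / (G x)\<^sup>2 \<le> 4/t\<^sup>2 * (c\<^sup>2 * W x)" .
      have "ennreal (W x / (G x)\<^sup>2) \<le> ennreal (4/t\<^sup>2 * (c\<^sup>2 * W x))" using r by (rule ennreal_leI)
      also have "\<dots> = ennreal (4/t\<^sup>2) * ennreal (c\<^sup>2 * W x)" by (rule ennreal_mult) (use Wnn[of x] in auto)
      finally have "ennreal (W x / (G x)\<^sup>2) \<le> ennreal (4/t\<^sup>2) * ennreal (c\<^sup>2 * W x)" .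
      then show ?thesis using x tT by (simp add: c_def indicator_def add_increasing)
    qed
  qed
  have "(\<integral>\<^sup>+ x. ennreal (W x / (G x)\<^sup>2) * indicator {0<..} x * (if t \<le> G x * cmod (FTo f x) then 1 else 0) \<partial>lborel)
     \<le> (\<integral>\<^sup>+ x. ennreal (W x / (G x)\<^sup>2) * indicator {x. t/2 \<le> G x * n1} x * indicator {0<..} x
        + ennreal (4/t\<^sup>2) * (ennreal (cmod (T2 x) powr 2 * W x) * indicator {0<..} x) \<partial>lborel)"
    by (rule nn_integral_mono) (rule pw)
  also have "\<dots> = (\<integral>\<^sup>+ x\<in>{0<..}. ennreal (W x / (G x)\<^sup>2) * indicator {x. t/2 \<le> G x * n1} x \<partial>lborel)
        + ennreal (4/t\<^sup>2) * normp_w 2 W T2"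
    unfolding normp_w_def by (subst nn_integral_add) (auto simp: nn_integral_cmult)
  also have "\<dots> \<le> ennreal (C1 * n1 / (t/2)) + ennreal (4/t\<^sup>2) * normp_w 2 Aw g2"
    using H5[OF n1, of "t/2"] H3[OF L2 L22] t unfolding T2_def by (intro add_mono mult_left_mono) auto
  also have "ennreal (C1 * n1 / (t/2)) = ennreal (2*C1/t) * normp_w 1 Aw g1"
    unfolding N1eq using t C1 n1 by (simp add: ennreal_mult[symmetric] field_simps)
  finally show ?thesis by (simp add: g1_def g2_def)
qed

lemma term1:
  assumes [measurable]: "f \<in> borel_measurable lborel"
  shows "(\<integral>\<^sup>+ t. ennreal (2*C1*p * t powr (p-2)) * indicator {0<..} t * normp_w 1 Aw (\<lambda>x. if t < cmod (f x) then f x else 0) \<partial>lborel)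
    \<le> ennreal (2*C1*p/(p-1)) * normp_w p Aw f"
proof -
  define F where "F = (\<lambda>t x. ennreal (2*C1*p * t powr (p-2)) * indicator {0<..} t *
     (ennreal (cmod (if t < cmod (f x) then f x else 0) powr 1 * Aw x) * indicator {0<..} x))"
  have Fm: "case_prod (\<lambda>x t. F t x) \<in> borel_measurable (lborel \<Otimes>\<^sub>M lborel)"
    unfolding F_def by measurable
  have "(\<integral>\<^sup>+ t. ennreal (2*C1*p * t powr (p-2)) * indicator {0<..} t * normp_w 1 Aw (\<lambda>x. if t < cmod (f x) then f x else 0) \<partial>lborel)
      = (\<integral>\<^sup>+ t. \<integral>\<^sup>+ x. F t x \<partial>lborel \<partial>lborel)"
    unfolding normp_w_def F_def by (intro nn_integral_cong) (subst nn_integral_cmult[symmetric], auto)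
  also have "\<dots> = (\<integral>\<^sup>+ x. \<integral>\<^sup>+ t. F t x \<partial>lborel \<partial>lborel)"
    by (rule lborel_pair.Fubini'[OF Fm])
  also have "\<dots> \<le> (\<integral>\<^sup>+ x. ennreal (2*C1*p/(p-1)) * (ennreal (cmod (f x) powr p * Aw x) * indicator {0<..} x) \<partial>lborel)"
  proof (rule nn_integral_mono)
    fix x
    define a where "a = cmod (f x)"
    have a: "a \<ge> 0" by (simp add: a_def)
    show "(\<integral>\<^sup>+ t. F t x \<partial>lborel) \<le> ennreal (2*C1*p/(p-1)) * (ennreal (cmod (f x) powr p * Aw x) * indicator {0<..} x)"
    proof (cases "x > 0")
      case False then show ?thesis by (simp add: F_def)
    next
      case True
      define c where "c = 2*C1*p * (a * Aw x)"
      have c: "c \<ge> 0" using C1 p1 a Awnn[of x] by (simp add: c_def)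
      have "(\<integral>\<^sup>+ t. F t x \<partial>lborel) = (\<integral>\<^sup>+ t. ennreal c * (ennreal (t powr (p-2)) * indicator {0<..} t * indicator {..<a} t) \<partial>lborel)"
      proof (intro nn_integral_cong)
        fix t
        show "F t x = ennreal c * (ennreal (t powr (p-2)) * indicator {0<..} t * indicator {..<a} t)"
        proof (cases "t > 0 \<and> t < a")
          case False
          then have "\<not> t > 0 \<or> \<not> t < a" by auto
          then show ?thesis by (auto simp: F_def a_def indicator_def)
        next
          case tt: True
          have "F t x = ennreal (2*C1*p * t powr (p-2)) * ennreal (a * Aw x)"
            using tt True a by (simp add: F_def a_def powr_one)
          also have "\<dots> = ennreal (2*C1*p * t powr (p-2) * (a * Aw x))"
            by (rule ennreal_mult[symmetric]) (use C1 p1 a Awnn[of x] in auto)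
          also have "\<dots> = ennreal (c * t powr (p-2))" by (simp add: c_def algebra_simps)
          also have "\<dots> = ennreal c * ennreal (t powr (p-2))" by (rule ennreal_mult) (use c in auto)
          finally show ?thesis using tt by simp
        qed
      qed
      also have "\<dots> = ennreal c * (\<integral>\<^sup>+ t. ennreal (t powr (p-2)) * indicator {0<..} t * indicator {..<a} t \<partial>lborel)"
        by (rule nn_integral_cmult) measurable
      also have "\<dots> \<le> ennreal c * ennreal (a powr (p-1) / (p-1))"
        by (intro mult_left_mono inner_lower a p1) simp
      also have "\<dots> = ennreal (c * (a powr (p-1) / (p-1)))"
        by (rule ennreal_mult[symmetric]) (use c p1 in auto)
      also have "c * (a powr (p-1) / (p-1)) = 2*C1*p/(p-1) * (a powr p * Aw x)"
      proof -
        have "a * a powr (p-1) = a powr p"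
          using powr_mul_add[of a 1 "p-1"] a p1 by (simp add: powr_one)
        then show ?thesis by (simp add: c_def field_simps)
      qed
      also have "ennreal (2*C1*p/(p-1) * (a powr p * Aw x)) = ennreal (2*C1*p/(p-1)) * ennreal (a powr p * Aw x)"
        by (rule ennreal_mult) (use C1 p1 a Awnn[of x] in auto)
      finally show ?thesis using True by (simp add: a_def)
    qed
  qed
  also have "\<dots> = ennreal (2*C1*p/(p-1)) * normp_w p Aw f"
    unfolding normp_w_def by (rule nn_integral_cmult) measurable
  finally show ?thesis .
qed

lemma term2:
  assumes [measurable]: "f \<in> borel_measurable lborel"
  shows "(\<integral>\<^sup>+ t. ennreal (4*p * t powr (p-3)) * indicator {0<..} t * normp_w 2 Aw (\<lambda>x. if t < cmod (f x) then 0 else f x) \<partial>lborel)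
    \<le> ennreal (4*p/(2-p)) * normp_w p Aw f"
proof -
  define F where "F = (\<lambda>t x. ennreal (4*p * t powr (p-3)) * indicator {0<..} t *
     (ennreal (cmod (if t < cmod (f x) then 0 else f x) powr 2 * Aw x) * indicator {0<..} x))"
  have Fm: "case_prod (\<lambda>x t. F t x) \<in> borel_measurable (lborel \<Otimes>\<^sub>M lborel)"
    unfolding F_def by measurable
  have "(\<integral>\<^sup>+ t. ennreal (4*p * t powr (p-3)) * indicator {0<..} t * normp_w 2 Aw (\<lambda>x. if t < cmod (f x) then 0 else f x) \<partial>lborel)
      = (\<integral>\<^sup>+ t. \<integral>\<^sup>+ x. F t x \<partial>lborel \<partial>lborel)"
    unfolding normp_w_def F_def by (intro nn_integral_cong) (subst nn_integral_cmult[symmetric], auto)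
  also have "\<dots> = (\<integral>\<^sup>+ x. \<integral>\<^sup>+ t. F t x \<partial>lborel \<partial>lborel)"
    by (rule lborel_pair.Fubini'[OF Fm])
  also have "\<dots> \<le> (\<integral>\<^sup>+ x. ennreal (4*p/(2-p)) * (ennreal (cmod (f x) powr p * Aw x) * indicator {0<..} x) \<partial>lborel)"
  proof (rule nn_integral_mono)
    fix x
    define a where "a = cmod (f x)"
    have a: "a \<ge> 0" by (simp add: a_def)
    show "(\<integral>\<^sup>+ t. F t x \<partial>lborel) \<le> ennreal (4*p/(2-p)) * (ennreal (cmod (f x) powr p * Aw x) * indicator {0<..} x)"
    proof (cases "x > 0 \<and> a > 0")
      case False
      then have "F t x = 0" for t by (auto simp: F_def a_def)
      then show ?thesis by simp
    next
      case True
      then have x: "x > 0" and apos: "a > 0" by auto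
      define c where "c = 4*p * (a\<^sup>2 * Aw x)"
      have c: "c \<ge> 0" using p1 Awnn[of x] by (simp add: c_def)
      have "(\<integral>\<^sup>+ t. F t x \<partial>lborel) = (\<integral>\<^sup>+ t. ennreal c * (ennreal (t powr (p-3)) * indicator {0<..} t * indicator {a..} t) \<partial>lborel)"
      proof (intro nn_integral_cong)
        fix t
        show "F t x = ennreal c * (ennreal (t powr (p-3)) * indicator {0<..} t * indicator {a..} t)"
        proof (cases "t > 0 \<and> a \<le> t")
          case False
          then have "\<not> t > 0 \<or> t < a" by auto
          then show ?thesis by (auto simp: F_def a_def indicator_def)
        next
          case tt: True
          have "F t x = ennreal (4*p * t powr (p-3)) * ennreal (a\<^sup>2 * Aw x)"
            using tt x a by (simp add: F_def a_def not_less)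
          also have "\<dots> = ennreal (4*p * t powr (p-3) * (a\<^sup>2 * Aw x))"
            by (rule ennreal_mult[symmetric]) (use p1 Awnn[of x] in auto)
          also have "\<dots> = ennreal (c * t powr (p-3))" by (simp add: c_def algebra_simps)
          also have "\<dots> = ennreal c * ennreal (t powr (p-3))" by (rule ennreal_mult) (use c in auto)
          finally show ?thesis using tt by simp
        qed
      qed
      also have "\<dots> = ennreal c * (\<integral>\<^sup>+ t. ennreal (t powr (p-3)) * indicator {0<..} t * indicator {a..} t \<partial>lborel)"
        by (rule nn_integral_cmult) measurable
      also have "\<dots> \<le> ennreal c * ennreal (a powr (p-2) / (2-p))"
        by (intro mult_left_mono inner_upper apos p2) simp
      also have "\<dots> = ennreal (c * (a powr (p-2) / (2-p)))"
        by (rule ennreal_mult[symmetric]) (use c p2 in auto)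
      also have "c * (a powr (p-2) / (2-p)) = 4*p/(2-p) * (a powr p * Aw x)"
      proof -
        have "a\<^sup>2 * a powr (p-2) = a powr p"
          using powr_mul_add[of a 2 "p-2"] apos by simp
        then show ?thesis by (simp add: c_def field_simps)
      qed
      also have "ennreal (4*p/(2-p) * (a powr p * Aw x)) = ennreal (4*p/(2-p)) * ennreal (a powr p * Aw x)"
        by (rule ennreal_mult) (use p1 p2 Awnn[of x] in auto)
      finally show ?thesis using x by (simp add: a_def)
    qed
  qed
  also have "\<dots> = ennreal (4*p/(2-p)) * normp_w p Aw f"
    unfolding normp_w_def by (rule nn_integral_cmult) measurable
  finally show ?thesis .
qed

lemma marc_main:
  assumes [measurable]: "f \<in> borel_measurable lborel" and f1: "Lp_w 1 Aw f" and fp: "Lp_w p Aw f"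
  shows "(\<integral>\<^sup>+ x\<in>{0<..}. ennreal (G x powr (p-2) * cmod (FTo f x) powr p * W x) \<partial>lborel)
     \<le> ennreal (2*C1*p/(p-1) + 4*p/(2-p)) * normp_w p Aw f"
proof -
  have [measurable]: "FTo f \<in> borel_measurable lborel" using H1[OF _ f1] by simp
  define om where "om = (\<lambda>x. ennreal (W x / (G x)\<^sup>2) * indicator {0<..} x)"
  define k where "k = (\<lambda>t::real. ennreal (p * t powr (p-1)) * indicator {0<..} t)"
  define ind where "ind = (\<lambda>x t. if t \<le> G x * cmod (FTo f x) then 1 else (0::ennreal))"
  define N1 where "N1 = (\<lambda>t. normp_w 1 Aw (\<lambda>x. if t < cmod (f x) then f x else 0))"
  define N2 where "N2 = (\<lambda>t. normp_w 2 Aw (\<lambda>x. if t < cmod (f x) then 0 else f x))"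
  have [measurable]: "om \<in> borel_measurable lborel" "k \<in> borel_measurable lborel"
    unfolding om_def k_def by measurable
  have indm: "case_prod ind \<in> borel_measurable (lborel \<Otimes>\<^sub>M lborel)"
    unfolding ind_def by measurable
  have N1m[measurable]: "N1 \<in> borel_measurable borel"
  proof -
    have "case_prod (\<lambda>t x. ennreal (cmod (if t < cmod (f x) then f x else 0) powr 1 * Aw x) * indicator {0<..} x)
       \<in> borel_measurable (lborel \<Otimes>\<^sub>M lborel)" by measurable
    from lborel.borel_measurable_nn_integral[OF this] show ?thesis by (simp add: N1_def normp_w_def)
  qed
  have N2m[measurable]: "N2 \<in> borel_measurable borel"
  proof -
    have "case_prod (\<lambda>t x. ennreal (cmod (if t < cmod (f x) then 0 else f x) powr 2 * Aw x) * indicator {0<..} x)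
       \<in> borel_measurable (lborel \<Otimes>\<^sub>M lborel)" by measurable
    from lborel.borel_measurable_nn_integral[OF this] show ?thesis by (simp add: N2_def normp_w_def)
  qed
  have stepA: "(\<integral>\<^sup>+ x\<in>{0<..}. ennreal (G x powr (p-2) * cmod (FTo f x) powr p * W x) \<partial>lborel)
      = (\<integral>\<^sup>+ x. \<integral>\<^sup>+ t. om x * (k t * ind x t) \<partial>lborel \<partial>lborel)"
  proof (rule nn_integral_cong)
    fix x
    show "ennreal (G x powr (p-2) * cmod (FTo f x) powr p * W x) * indicator {0<..} x
        = (\<integral>\<^sup>+ t. om x * (k t * ind x t) \<partial>lborel)"
    proof (cases "x > 0")
      case False then show ?thesis by (simp add: om_def)
    next
      case True
      have Gx: "G x > 0" using Gpos[OF True] .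
      define sx where "sx = G x * cmod (FTo f x)"
      have sx: "sx \<ge> 0" using Gx by (simp add: sx_def)
      have "ennreal (G x powr (p-2) * cmod (FTo f x) powr p * W x) = ennreal (W x / (G x)\<^sup>2 * sx powr p)"
        using powr_rearr[OF Gx, of "cmod (FTo f x)" p "W x"] by (simp add: sx_def)
      also have "\<dots> = ennreal (W x / (G x)\<^sup>2) * ennreal (sx powr p)"
        by (rule ennreal_mult) (use Wnn[of x] in auto)
      also have "ennreal (sx powr p) = (\<integral>\<^sup>+ t. ennreal (p * t powr (p-1)) * indicator {0<..} t * indicator {..sx} t \<partial>lborel)"
        by (rule layer_powr[OF sx]) (use p1 in auto)
      also have "\<dots> = (\<integral>\<^sup>+ t. k t * ind x t \<partial>lborel)"
        by (intro nn_integral_cong) (auto simp: k_def ind_def sx_def indicator_def)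
      also have "ennreal (W x / (G x)\<^sup>2) * (\<integral>\<^sup>+ t. k t * ind x t \<partial>lborel) = (\<integral>\<^sup>+ t. om x * (k t * ind x t) \<partial>lborel)"
        using True unfolding om_def
        by (subst nn_integral_cmult[symmetric]) (use indm in \<open>auto simp: measurable_Pair2\<close>)
      finally show ?thesis using True by simp
    qed
  qed
  have Fm: "case_prod (\<lambda>x t. om x * (k t * ind x t)) \<in> borel_measurable (lborel \<Otimes>\<^sub>M lborel)"
    using indm by measurable
  have stepC: "(\<integral>\<^sup>+ x. \<integral>\<^sup>+ t. om x * (k t * ind x t) \<partial>lborel \<partial>lborel)
      = (\<integral>\<^sup>+ t. k t * (\<integral>\<^sup>+ x. om x * ind x t \<partial>lborel) \<partial>lborel)"
  proof -
    have "(\<integral>\<^sup>+ x. \<integral>\<^sup>+ t. om x * (k t * ind x t) \<partial>lborel \<partial>lborel) = (\<integral>\<^sup>+ t. \<integral>\<^sup>+ x. om x * (k t * ind x t) \<partial>lborel \<partial>lborel)"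
      by (rule lborel_pair.Fubini'[OF Fm, symmetric])
    also have "\<dots> = (\<integral>\<^sup>+ t. k t * (\<integral>\<^sup>+ x. om x * ind x t \<partial>lborel) \<partial>lborel)"
    proof (rule nn_integral_cong)
      fix t
      have "(\<integral>\<^sup>+ x. om x * (k t * ind x t) \<partial>lborel) = (\<integral>\<^sup>+ x. k t * (om x * ind x t) \<partial>lborel)"
        by (simp add: ac_simps)
      also have "\<dots> = k t * (\<integral>\<^sup>+ x. om x * ind x t \<partial>lborel)"
        by (rule nn_integral_cmult) (use indm in measurable)
      finally show "(\<integral>\<^sup>+ x. om x * (k t * ind x t) \<partial>lborel) = k t * (\<integral>\<^sup>+ x. om x * ind x t \<partial>lborel)" .
    qed
    finally show ?thesis .
  qed
  have stepE: "k t * (\<integral>\<^sup>+ x. om x * ind x t \<partial>lborel)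
     \<le> ennreal (2*C1*p * t powr (p-2)) * indicator {0<..} t * N1 t + ennreal (4*p * t powr (p-3)) * indicator {0<..} t * N2 t" for t
  proof (cases "t > 0")
    case False then show ?thesis by (simp add: k_def)
  next
    case True
    have "(\<integral>\<^sup>+ x. om x * ind x t \<partial>lborel) = (\<integral>\<^sup>+ x. ennreal (W x / (G x)\<^sup>2) * indicator {0<..} x * (if t \<le> G x * cmod (FTo f x) then 1 else 0) \<partial>lborel)"
      by (simp add: om_def ind_def)
    also have "\<dots> \<le> ennreal (2*C1/t) * N1 t + ennreal (4/t\<^sup>2) * N2 t"
      unfolding N1_def N2_def by (rule E_bound[OF _ f1 fp True]) simp
    finally have E: "(\<integral>\<^sup>+ x. om x * ind x t \<partial>lborel) \<le> ennreal (2*C1/t) * N1 t + ennreal (4/t\<^sup>2) * N2 t" .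
    have "k t * (\<integral>\<^sup>+ x. om x * ind x t \<partial>lborel) \<le> ennreal (p * t powr (p-1)) * (ennreal (2*C1/t) * N1 t + ennreal (4/t\<^sup>2) * N2 t)"
      using True E by (simp add: k_def mult_left_mono)
    also have "\<dots> = ennreal (p * t powr (p-1) * (2*C1/t)) * N1 t + ennreal (p * t powr (p-1) * (4/t\<^sup>2)) * N2 t"
    proof -
      have e1: "ennreal (p * t powr (p-1)) * ennreal (2*C1/t) = ennreal (p * t powr (p-1) * (2*C1/t))"
        by (rule ennreal_mult[symmetric]) (use True C1 p1 in auto)
      have e2: "ennreal (p * t powr (p-1)) * ennreal (4/t\<^sup>2) = ennreal (p * t powr (p-1) * (4/t\<^sup>2))"
        by (rule ennreal_mult[symmetric]) (use True C1 p1 in auto)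
      show ?thesis by (simp only: distrib_left mult.assoc[symmetric] e1 e2)
    qed
    also have "p * t powr (p-1) * (2*C1/t) = 2*C1*p * t powr (p-2)"
      using powr_tdiv(1)[OF True, of p] True by (simp add: field_simps)
    also have "p * t powr (p-1) * (4/t\<^sup>2) = 4*p * t powr (p-3)"
      using powr_tdiv(2)[OF True, of p] True by (simp add: field_simps)
    finally show ?thesis using True by simp
  qed
  have "(\<integral>\<^sup>+ x\<in>{0<..}. ennreal (G x powr (p-2) * cmod (FTo f x) powr p * W x) \<partial>lborel)
      = (\<integral>\<^sup>+ t. k t * (\<integral>\<^sup>+ x. om x * ind x t \<partial>lborel) \<partial>lborel)"
    using stepA stepC by simp
  also have "\<dots> \<le> (\<integral>\<^sup>+ t. ennreal (2*C1*p * t powr (p-2)) * indicator {0<..} t * N1 t + ennreal (4*p * t powr (p-3)) * indicator {0<..} t * N2 t \<partial>lborel)"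
    by (rule nn_integral_mono) (rule stepE)
  also have "\<dots> = (\<integral>\<^sup>+ t. ennreal (2*C1*p * t powr (p-2)) * indicator {0<..} t * N1 t \<partial>lborel)
      + (\<integral>\<^sup>+ t. ennreal (4*p * t powr (p-3)) * indicator {0<..} t * N2 t \<partial>lborel)"
    by (intro nn_integral_add) measurable
  also have "\<dots> \<le> ennreal (2*C1*p/(p-1)) * normp_w p Aw f + ennreal (4*p/(2-p)) * normp_w p Aw f"
    unfolding N1_def N2_def by (intro add_mono term1 term2) simp_all
  also have "\<dots> = ennreal (2*C1*p/(p-1) + 4*p/(2-p)) * normp_w p Aw f"
    using C1 p1 p2 by (simp add: distrib_right ennreal_plus)
  finally show ?thesis .
qed

end

lemma pass_limit:
  fixes T :: "nat \<Rightarrow> real \<Rightarrow> complex" and h :: "real \<Rightarrow> complex" and V W :: "real \<Rightarrow> real"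
    and B :: "nat \<Rightarrow> ennreal" and q p :: real
  assumes q: "q > 0" and p: "p > 0"
    and Tm[measurable]: "\<And>n. T n \<in> borel_measurable lborel"
    and hm[measurable]: "h \<in> borel_measurable lborel"
    and Vm[measurable]: "V \<in> borel_measurable lborel" and Vnn: "\<And>x. V x \<ge> 0"
    and Wm[measurable]: "W \<in> borel_measurable lborel" and Wnn: "\<And>x. W x \<ge> 0"
    and conv: "(\<lambda>n. normp_w q W (\<lambda>x. T n x - h x)) \<longlonglongrightarrow> 0"
    and bound: "\<And>n. (\<integral>\<^sup>+ x\<in>{0<..}. ennreal (V x * cmod (T n x) powr p * W x) \<partial>lborel) \<le> B n"
    and Bconv: "B \<longlonglongrightarrow> Bl"
  shows "(\<integral>\<^sup>+ x\<in>{0<..}. ennreal (V x * cmod (h x) powr p * W x) \<partial>lborel) \<le> Bl"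
proof -
  define u where "u = (\<lambda>n x. cmod (T n x - h x) powr q * W x * indicator {0<..} x)"
  have um[measurable]: "u n \<in> borel_measurable lborel" for n unfolding u_def by measurable
  have unn: "u n x \<ge> 0" for n x using Wnn[of x] by (simp add: u_def)
  have nu: "(\<integral>\<^sup>+ x. ennreal (u n x) \<partial>lborel) = normp_w q W (\<lambda>x. T n x - h x)" for n
    unfolding normp_w_def u_def by (intro nn_integral_cong) (auto simp: indicator_def)
  have "\<forall>\<^sub>F n in sequentially. normp_w q W (\<lambda>x. T n x - h x) < 1"
    using conv by (rule order_tendstoD) simp
  then obtain N where N: "\<And>n. n \<ge> N \<Longrightarrow> normp_w q W (\<lambda>x. T n x - h x) < 1"
    by (auto simp: eventually_sequentially)
  define v where "v = (\<lambda>n. u (n + N))"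
  have vint: "integrable lborel (v n)" for n
  proof (subst integrable_iff_bounded, intro conjI)
    show "v n \<in> borel_measurable lborel" unfolding v_def by simp
    have "(\<integral>\<^sup>+ x. ennreal (norm (v n x)) \<partial>lborel) = normp_w q W (\<lambda>x. T (n+N) x - h x)"
      unfolding v_def using unn nu by simp
    also have "\<dots> < 1" using N[of "n+N"] by simp
    finally have X: "(\<integral>\<^sup>+ x. ennreal (norm (v n x)) \<partial>lborel) < 1" .
    show "(\<integral>\<^sup>+ x. ennreal (norm (v n x)) \<partial>lborel) < \<infinity>" by (rule order.strict_trans[OF X]) simp
  qed
  have "(\<lambda>n. normp_w q W (\<lambda>x. T (n+N) x - h x)) \<longlonglongrightarrow> 0"
    using LIMSEQ_ignore_initial_segment[OF conv, of N] by simp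
  then have "(\<lambda>n. enn2real (normp_w q W (\<lambda>x. T (n+N) x - h x))) \<longlonglongrightarrow> 0"
    using tendsto_enn2real[of _ 0] by simp
  moreover have "(\<integral>x. norm (v n x) \<partial>lborel) = enn2real (normp_w q W (\<lambda>x. T (n+N) x - h x))" for n
  proof -
    have "(\<integral>x. norm (v n x) \<partial>lborel) = enn2real (\<integral>\<^sup>+ x. ennreal (norm (v n x)) \<partial>lborel)"
      by (rule integral_eq_nn_integral) (auto simp: v_def)
    also have "(\<integral>\<^sup>+ x. ennreal (norm (v n x)) \<partial>lborel) = normp_w q W (\<lambda>x. T (n+N) x - h x)"
      unfolding v_def using unn nu by simp
    finally show ?thesis .
  qed
  ultimately have "(\<lambda>n. (\<integral>x. norm (v n x) \<partial>lborel)) \<longlonglongrightarrow> 0" by simp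
  from tendsto_L1_AE_subseq[OF vint this]
  obtain r where r: "strict_mono r" "AE x in lborel. (\<lambda>n. v (r n) x) \<longlonglongrightarrow> 0" by blast
  define r' where "r' = (\<lambda>n. r n + N)"
  have r': "strict_mono r'" using r(1) by (simp add: r'_def strict_mono_def)
  define \<phi> where "\<phi> = (\<lambda>n x. ennreal (V x * cmod (T (r' n) x) powr p * W x) * indicator {0<..} x)"
  define \<phi>0 where "\<phi>0 = (\<lambda>x. ennreal (V x * cmod (h x) powr p * W x) * indicator {0<..} x)"
  have \<phi>m: "\<phi> n \<in> borel_measurable lborel" for n unfolding \<phi>_def by measurable
  have AEeq: "AE x in lborel. \<phi>0 x = liminf (\<lambda>n. \<phi> n x)"
    using r(2)
  proof (eventually_elim)
    case (elim x)
    show ?case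
    proof (cases "x > 0 \<and> W x > 0")
      case False
      then have "x \<le> 0 \<or> W x = 0" using Wnn[of x] by force
      then have "\<phi> n x = 0 \<and> \<phi>0 x = 0" for n
      proof
        assume "x \<le> 0" then show ?thesis by (simp add: \<phi>_def \<phi>0_def)
      next
        assume "W x = 0" then show ?thesis by (simp add: \<phi>_def \<phi>0_def)
      qed
      then show ?thesis by (simp add: Liminf_const)
    next
      case True
      then have x: "x > 0" and Wx: "W x > 0" by auto
      have "(\<lambda>n. u (r' n) x) \<longlonglongrightarrow> 0" using elim by (simp add: v_def r'_def)
      then have "(\<lambda>n. cmod (T (r' n) x - h x) powr q * W x / W x) \<longlonglongrightarrow> 0 / W x"
        using x Wx by (intro tendsto_divide) (auto simp: u_def)
      then have a: "(\<lambda>n. cmod (T (r' n) x - h x) powr q) \<longlonglongrightarrow> 0" using Wx by simp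
      have "(\<lambda>n. (cmod (T (r' n) x - h x) powr q) powr (1/q)) \<longlonglongrightarrow> 0 powr (1/q)"
        using q by (intro tendsto_powr'[OF a]) auto
      then have "(\<lambda>n. cmod (T (r' n) x - h x)) \<longlonglongrightarrow> 0" using q by (simp add: powr_powr)
      then have Tl: "(\<lambda>n. T (r' n) x) \<longlonglongrightarrow> h x" by (simp add: tendsto_norm_zero_iff LIM_zero_iff)
      have "(\<lambda>n. cmod (T (r' n) x)) \<longlonglongrightarrow> cmod (h x)" by (rule tendsto_norm[OF Tl])
      then have "(\<lambda>n. cmod (T (r' n) x) powr p) \<longlonglongrightarrow> cmod (h x) powr p"
        by (rule tendsto_powr'[OF _ tendsto_const]) (use p in auto)
      then have "(\<lambda>n. V x * cmod (T (r' n) x) powr p * W x) \<longlonglongrightarrow> V x * cmod (h x) powr p * W x"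
        by (rule tendsto_mult[OF tendsto_mult[OF tendsto_const] tendsto_const])
      then have "(\<lambda>n. \<phi> n x) \<longlonglongrightarrow> \<phi>0 x"
        using x by (simp add: \<phi>_def \<phi>0_def tendsto_ennrealI)
      then show ?thesis by (simp add: lim_imp_Liminf)
    qed
  qed
  have "(\<integral>\<^sup>+ x\<in>{0<..}. ennreal (V x * cmod (h x) powr p * W x) \<partial>lborel) = (\<integral>\<^sup>+ x. liminf (\<lambda>n. \<phi> n x) \<partial>lborel)"
    unfolding \<phi>0_def[symmetric] by (rule nn_integral_cong_AE[OF AEeq])
  also have "\<dots> \<le> liminf (\<lambda>n. integral\<^sup>N lborel (\<phi> n))"
    by (rule nn_integral_liminf[OF \<phi>m])
  also have "\<dots> \<le> liminf (\<lambda>n. B (r' n))"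
  proof (intro Liminf_mono always_eventually allI)
    fix n show "integral\<^sup>N lborel (\<phi> n) \<le> B (r' n)" using bound[of "r' n"] by (simp add: \<phi>_def)
  qed
  also have "liminf (\<lambda>n. B (r' n)) = Bl"
    using LIMSEQ_subseq_LIMSEQ[OF Bconv r'] by (intro lim_imp_Liminf) (auto simp: o_def)
  finally show ?thesis .
qed

lemma normp_tri:
  fixes f d :: "real \<Rightarrow> complex" and Aw :: "real \<Rightarrow> real"
  assumes [measurable]: "f \<in> borel_measurable lborel" "d \<in> borel_measurable lborel" "Aw \<in> borel_measurable lborel"
    and Awnn: "\<And>x. Aw x \<ge> 0" and p: "p > 0"
  shows "normp_w p Aw (\<lambda>x. f x + d x) \<le> ennreal (2 powr p) * (normp_w p Aw f + normp_w p Aw d)"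
proof -
  have pw: "cmod (a + b) powr p \<le> 2 powr p * (cmod a powr p + cmod b powr p)" for a b :: complex
  proof -
    define m where "m = max (cmod a) (cmod b)"
    have "cmod (a + b) \<le> 2 * m" using norm_triangle_ineq[of a b] by (simp add: m_def)
    then have "cmod (a + b) powr p \<le> (2 * m) powr p" using p by (intro powr_mono2) auto
    also have "\<dots> = 2 powr p * m powr p" by (simp add: powr_mult m_def)
    also have "m powr p \<le> cmod a powr p + cmod b powr p" by (simp add: m_def max_def)
    finally show ?thesis by simp
  qed
  have "normp_w p Aw (\<lambda>x. f x + d x)
      \<le> (\<integral>\<^sup>+ x. ennreal (2 powr p) * (ennreal (cmod (f x) powr p * Aw x) * indicator {0<..} x)
           + ennreal (2 powr p) * (ennreal (cmod (d x) powr p * Aw x) * indicator {0<..} x) \<partial>lborel)"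
    unfolding normp_w_def
  proof (intro nn_integral_mono)
    fix x
    have "cmod (f x + d x) powr p * Aw x \<le> 2 powr p * (cmod (f x) powr p + cmod (d x) powr p) * Aw x"
      using pw Awnn[of x] by (intro mult_right_mono) auto
    also have "\<dots> = 2 powr p * (cmod (f x) powr p * Aw x) + 2 powr p * (cmod (d x) powr p * Aw x)"
      by (simp add: algebra_simps)
    finally have r: "cmod (f x + d x) powr p * Aw x \<le> 2 powr p * (cmod (f x) powr p * Aw x) + 2 powr p * (cmod (d x) powr p * Aw x)" .
    have "ennreal (cmod (f x + d x) powr p * Aw x) \<le> ennreal (2 powr p * (cmod (f x) powr p * Aw x) + 2 powr p * (cmod (d x) powr p * Aw x))"
      using r by (rule ennreal_leI)
    also have "\<dots> = ennreal (2 powr p) * ennreal (cmod (f x) powr p * Aw x) + ennreal (2 powr p) * ennreal (cmod (d x) powr p * Aw x)"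
      using Awnn[of x] by (simp add: ennreal_plus ennreal_mult)
    finally show "ennreal (cmod (f x + d x) powr p * Aw x) * indicator {0<..} x
      \<le> ennreal (2 powr p) * (ennreal (cmod (f x) powr p * Aw x) * indicator {0<..} x)
         + ennreal (2 powr p) * (ennreal (cmod (d x) powr p * Aw x) * indicator {0<..} x)"
      by (cases "x > 0") (auto simp: mult.assoc)
  qed
  also have "\<dots> = ennreal (2 powr p) * (normp_w p Aw f + normp_w p Aw d)"
    unfolding normp_w_def by (subst nn_integral_add) (auto simp: nn_integral_cmult distrib_left)
  finally show ?thesis .
qed

definition restr :: "(real \<Rightarrow> 'a::real_vector) \<Rightarrow> real \<Rightarrow> 'a" where
  "restr g = (\<lambda>x. indicator {0<..} x *\<^sub>R g x)"

lemma restr_pos[simp]: "x > 0 \<Longrightarrow> restr g x = g x" by (simp add: restr_def)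

lemma normp_restr: "normp_w q W (restr g) = normp_w q W g"
  unfolding normp_w_def by (intro nn_integral_cong) (auto simp: indicator_def restr_def)

lemma normp_restrA: "normp_w q (restr A) g = normp_w q A g"
  unfolding normp_w_def by (intro nn_integral_cong) (auto simp: indicator_def restr_def)

lemma Lp_restr: "Lp_w q W (restr g) \<longleftrightarrow> Lp_w q W g"
proof -
  have "(\<lambda>x. indicator {0<..} x *\<^sub>R restr g x) = (\<lambda>x. indicator {0<..} x *\<^sub>R g x)"
    by (auto simp: restr_def indicator_def fun_eq_iff)
  then show ?thesis using normp_restr[of q W g] unfolding Lp_w_def normp_w_def set_borel_measurable_def by simp
qed

lemma Lp_restrA: "Lp_w q (restr A) g \<longleftrightarrow> Lp_w q A g"
  using normp_restrA[of q A g] unfolding Lp_w_def normp_w_def by simp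

lemma restr_meas: "Lp_w q W g \<Longrightarrow> restr g \<in> borel_measurable lborel"
  unfolding Lp_w_def set_borel_measurable_def restr_def by simp

lemma FT_restr: "FT A phi (restr g) = FT A phi g"
  unfolding FT_def set_lebesgue_integral_def
  by (intro ext Bochner_Integration.integral_cong) (auto simp: indicator_def restr_def)

lemma FT_restrA: "FT (restr A) phi g = FT A phi g"
  unfolding FT_def set_lebesgue_integral_def
  by (intro ext Bochner_Integration.integral_cong) (auto simp: indicator_def restr_def)





lemma gw_pos: "x > 0 \<Longrightarrow> gw \<alpha> \<rho> k x > 0"
  by (simp add: gw_def)

lemma main_bound:
  fixes \<alpha> \<rho> k k1 k2 p :: real
    and A B :: "real \<Rightarrow> real" and W :: "real \<Rightarrow> real" and phi :: "real \<Rightarrow> real \<Rightarrow> real"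
  assumes CT: "CT_hyp \<alpha> \<rho> B A"
    and IP: "is_phi \<rho> A phi"
    and PD: "plancherel_density \<alpha> \<rho> A phi W k k1 k2"
    and cases: "(\<rho> = 0 \<and> \<alpha> > 0) \<or> \<rho> > 0"
    and p1: "1 < p" and p2: "p \<le> 2"
  shows "\<exists>C>0. (\<forall>g. g \<in> borel_measurable lborel \<longrightarrow> Lp_w 1 A g \<longrightarrow> Lp_w p A g \<longrightarrow>
      (\<integral>\<^sup>+ x\<in>{0<..}. ennreal (gw \<alpha> \<rho> k x powr (p-2) * cmod (FT A phi g x) powr p * W x) \<partial>lborel)
        \<le> ennreal C * normp_w p A g)
    \<and> (\<forall>g. Lp_w 1 A g \<longrightarrow> FT A phi g \<in> borel_measurable lborel)"
proof -
  note ct = CT_facts[OF CT]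
  have Apos: "\<And>x. x > 0 \<Longrightarrow> A x > 0" and Amono: "\<And>x y. 0 \<le> x \<Longrightarrow> x \<le> y \<Longrightarrow> A x \<le> A y"
    and Acont: "continuous_on {0..} A" and Ader: "\<And>x. x > 0 \<Longrightarrow> (A has_real_derivative deriv A x) (at x)"
    and \<alpha>: "\<alpha> > -1/2" and Ann: "\<And>x. x \<ge> 0 \<Longrightarrow> A x \<ge> 0"
    using ct by auto
  have cphi: "\<And>l. continuous_on {0..} (phi l)" and p0: "\<And>l. phi l 0 = 1"
    and d0: "\<And>l. (phi l has_real_derivative 0) (at 0 within {0..})"
    and ode: "\<And>l x. x > 0 \<Longrightarrow> phi l differentiable (at x) \<and> deriv (phi l) differentiable (at x) \<and>
        deriv (deriv (phi l)) x + deriv A x / A x * deriv (phi l) x = -(l\<^sup>2 + \<rho>\<^sup>2) * phi l x"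
    using IP unfolding is_phi_def by auto
  have Wsym: "\<And>x. W (-x) = W x" and Wc: "continuous_on UNIV W" and Wnn: "\<And>x. W x \<ge> 0"
    and planch: "\<And>f. Lp_w 1 A f \<Longrightarrow> Lp_w 2 A f \<Longrightarrow> normp_w 2 W (FT A phi f) = normp_w 2 A f"
    and L1b: "\<And>f l. Lp_w 1 A f \<Longrightarrow> ennreal (cmod (FT A phi f l)) \<le> normp_w 1 A f"
    and k: "k > 0" and k1: "k1 > 0" and k2: "k2 > 0"
    and E1: "\<rho> = 0 \<and> \<alpha> > 0 \<Longrightarrow> (\<forall>l. k1 * \<bar>l\<bar> powr (2*\<alpha>+1) \<le> W l \<and> W l \<le> k2 * \<bar>l\<bar> powr (2*\<alpha>+1))"
    and E23: "\<rho> > 0 \<Longrightarrow> (\<forall>l. \<bar>l\<bar> > k \<longrightarrow> k1 * \<bar>l\<bar> powr (2*\<alpha>+1) \<le> W l \<and> W l \<le> k2 * \<bar>l\<bar> powr (2*\<alpha>+1)) \<and>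
        (\<forall>l. \<bar>l\<bar> \<le> k \<longrightarrow> k1 * l\<^sup>2 \<le> W l \<and> W l \<le> k2 * l\<^sup>2)"
    using PD unfolding plancherel_density_def by auto
  have bphi: "\<bar>phi l x\<bar> \<le> 1" if "x \<ge> 0" for l x
  proof (cases "x = 0")
    case True then show ?thesis using p0 by simp
  next
    case False
    then have "x > 0" using that by simp
    from phi_le1_pos[OF Apos Amono Acont cphi[of l] L1b[of _ l] this] show ?thesis .
  qed
  have iphi: "A x * deriv (phi l) x = -(l\<^sup>2 + \<rho>\<^sup>2) * integral {0..x} (\<lambda>s. A s * phi l s)" if "x > 0" for l x
    by (rule ode_identity[OF Apos Amono Acont Ader cphi p0 d0 ode that])
  have dphi: "\<And>l x. x > 0 \<Longrightarrow> phi l differentiable (at x)" using ode by blast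
  have jc: "continuous_on (UNIV \<times> {0<..}) (\<lambda>z. phi (fst z) (snd z))"
    by (rule phi_joint_cont[OF Apos Ann Amono Acont cphi p0 dphi iphi bphi])
  have FTm: "FT A phi g \<in> borel_measurable lborel" if "Lp_w 1 A g" for g
    by (rule FT_measurable[OF Acont jc that])
  have Wm: "W \<in> borel_measurable lborel"
    using borel_measurable_continuous_onI[OF Wc] by simp
  have Gm: "gw \<alpha> \<rho> k \<in> borel_measurable lborel" unfolding gw_def by measurable
  have main: "\<exists>C>0. \<forall>g. g \<in> borel_measurable lborel \<longrightarrow> Lp_w 1 A g \<longrightarrow> Lp_w p A g \<longrightarrow>
      (\<integral>\<^sup>+ x\<in>{0<..}. ennreal (gw \<alpha> \<rho> k x powr (p-2) * cmod (FT A phi g x) powr p * W x) \<partial>lborel)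
        \<le> ennreal C * normp_w p A g"
  proof (cases "p = 2")
    case True
    show ?thesis
    proof (intro exI[of _ 1] conjI allI impI)
      fix g :: "real \<Rightarrow> complex" assume g1: "Lp_w 1 A g" and gp: "Lp_w p A g"
      have "(\<integral>\<^sup>+ x\<in>{0<..}. ennreal (gw \<alpha> \<rho> k x powr (p-2) * cmod (FT A phi g x) powr p * W x) \<partial>lborel)
          = normp_w 2 W (FT A phi g)"
        unfolding normp_w_def using True
        by (intro nn_integral_cong) (auto simp: indicator_def gw_pos[THEN less_imp_neq, symmetric])
      also have "\<dots> = normp_w 2 A g" using planch g1 gp True by simp
      finally show "(\<integral>\<^sup>+ x\<in>{0<..}. ennreal (gw \<alpha> \<rho> k x powr (p-2) * cmod (FT A phi g x) powr p * W x) \<partial>lborel)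
        \<le> ennreal 1 * normp_w p A g" using True by simp
    qed simp
  next
    case False
    then have p2': "p < 2" using p2 by simp
    define Ar where "Ar = restr A"
    define C1 where "C1 = k2 * (1/(2*\<alpha>+2) + 1/3)"
    have C1: "C1 \<ge> 0" using k2 \<alpha> by (simp add: C1_def)
    have Arm: "Ar \<in> borel_measurable lborel" unfolding Ar_def restr_def by (rule meas_restr[OF Acont])
    have Arnn: "Ar x \<ge> 0" for x using Ann[of x] by (auto simp: Ar_def restr_def indicator_def)
    interpret M: marc "FT A phi" Ar W "gw \<alpha> \<rho> k" p C1
    proof
      show "1 < p" "p < 2" "0 \<le> C1" by (fact p1 p2' C1)+
      show "Ar \<in> borel_measurable lborel" "W \<in> borel_measurable lborel" "gw \<alpha> \<rho> k \<in> borel_measurable lborel"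
        by (fact Arm Wm Gm)+
      show "\<And>x. 0 \<le> Ar x" "\<And>x. 0 \<le> W x" by (fact Arnn Wnn)+
      show "\<And>x. 0 < x \<Longrightarrow> 0 < gw \<alpha> \<rho> k x" by (rule gw_pos)
      show "FT A phi f \<in> borel_measurable lborel" if "f \<in> borel_measurable lborel" "Lp_w 1 Ar f" for f
        using FTm that by (simp add: Ar_def Lp_restrA)
      show "ennreal (cmod (FT A phi f l)) \<le> normp_w 1 Ar f" if "Lp_w 1 Ar f" for f l
        using L1b that by (simp add: Ar_def Lp_restrA normp_restrA)
      show "normp_w 2 W (FT A phi f) \<le> normp_w 2 Ar f" if "Lp_w 1 Ar f" "Lp_w 2 Ar f" for f
        using planch that by (simp add: Ar_def Lp_restrA normp_restrA)
      show "FT A phi (\<lambda>x. f x + g x) l = FT A phi f l + FT A phi g l" if "Lp_w 1 Ar f" "Lp_w 1 Ar g" for f g l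
        using that unfolding Ar_def Lp_restrA
        by (intro FT_add FT_integrable[OF Ann Acont cphi bphi]) auto
      show "(\<integral>\<^sup>+ x\<in>{0<..}. ennreal (W x / (gw \<alpha> \<rho> k x)\<^sup>2) * indicator {x. t \<le> gw \<alpha> \<rho> k x * c} x \<partial>lborel)
          \<le> ennreal (C1 * c / t)" if "0 \<le> c" "0 < t" for c t
        unfolding C1_def
        by (rule weak_gw[OF \<alpha> _ cases _ _ Wnn that]) (use k2 E1 E23 in auto)
    qed
    show ?thesis
    proof (intro exI[of _ "2*C1*p/(p-1) + 4*p/(2-p)"] conjI allI impI)
      show "0 < 2*C1*p/(p-1) + 4*p/(2-p)" using C1 p1 p2' by (intro add_nonneg_pos) auto
      fix g :: "real \<Rightarrow> complex" assume gm: "g \<in> borel_measurable lborel" and g1: "Lp_w 1 A g" and gp: "Lp_w p A g"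
      show "(\<integral>\<^sup>+ x\<in>{0<..}. ennreal (gw \<alpha> \<rho> k x powr (p-2) * cmod (FT A phi g x) powr p * W x) \<partial>lborel)
        \<le> ennreal (2*C1*p/(p-1) + 4*p/(2-p)) * normp_w p A g"
        using M.marc_main[OF gm] g1 gp by (simp add: Ar_def Lp_restrA normp_restrA)
    qed
  qed
  then show ?thesis using FTm by blast
qed

theorem lemma1:
  fixes \<alpha> \<rho> k k1 k2 p :: real
    and A B :: "real \<Rightarrow> real" and W :: "real \<Rightarrow> real" and phi :: "real \<Rightarrow> real \<Rightarrow> real"
  assumes "CT_hyp \<alpha> \<rho> B A"
    and "is_phi \<rho> A phi"
    and "plancherel_density \<alpha> \<rho> A phi W k k1 k2"
    and "(\<rho> = 0 \<and> \<alpha> > 0) \<or> \<rho> > 0"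
    and "1 < p" and "p \<le> 2"
  shows "\<exists>C>0. \<forall>f h. Lp_w p A f \<and> FT_ext p A W phi f h \<longrightarrow>
           (\<integral>\<^sup>+ x\<in>{0<..}. ennreal (gw \<alpha> \<rho> k x powr (p-2) * cmod (h x) powr p * W x) \<partial>lborel)
             \<le> ennreal C * normp_w p A f"
proof -
  obtain C where C: "C > 0" and main: "\<And>g. g \<in> borel_measurable lborel \<Longrightarrow> Lp_w 1 A g \<Longrightarrow> Lp_w p A g \<Longrightarrow>
      (\<integral>\<^sup>+ x\<in>{0<..}. ennreal (gw \<alpha> \<rho> k x powr (p-2) * cmod (FT A phi g x) powr p * W x) \<partial>lborel)
        \<le> ennreal C * normp_w p A g"
    and FTm: "\<And>g. Lp_w 1 A g \<Longrightarrow> FT A phi g \<in> borel_measurable lborel"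
    using main_bound[OF assms] by blast
  note ct = CT_facts[OF assms(1)]
  have Acont: "continuous_on {0..} A" and Ann: "\<And>x. x \<ge> 0 \<Longrightarrow> A x \<ge> 0" using ct by auto
  have Wc: "continuous_on UNIV W" and Wnn: "\<And>x. W x \<ge> 0"
    using assms(3) unfolding plancherel_density_def by auto
  have Wm: "W \<in> borel_measurable lborel"
    using borel_measurable_continuous_onI[OF Wc] by simp
  have p1: "1 < p" and p2: "p \<le> 2" by (fact assms(5,6))+
  define Ar where "Ar = restr A"
  have Arm: "Ar \<in> borel_measurable lborel" unfolding Ar_def restr_def by (rule meas_restr[OF Acont])
  have Arnn: "Ar x \<ge> 0" for x using Ann[of x] by (auto simp: Ar_def restr_def indicator_def)
  show ?thesis
  proof (intro exI[of _ "C * 2 powr p"] conjI allI impI)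
    show "C * 2 powr p > 0" using C by simp
    fix f h assume fh: "Lp_w p A f \<and> FT_ext p A W phi f h"
    then have fp: "Lp_w p A f" and hL: "Lp_w (p/(p-1)) W h" by (auto simp: FT_ext_def)
    from fh obtain fs where fs: "\<And>n. Lp_w 1 A (fs n) \<and> Lp_w p A (fs n)"
      and conv1: "(\<lambda>n. normp_w p A (\<lambda>x. fs n x - f x)) \<longlonglongrightarrow> 0"
      and conv2: "(\<lambda>n. normp_w (p/(p-1)) W (\<lambda>x. FT A phi (fs n) x - h x)) \<longlonglongrightarrow> 0"
      unfolding FT_ext_def by blast
    define T where "T = (\<lambda>n. FT A phi (fs n))"
    have Tm: "T n \<in> borel_measurable lborel" for n using FTm fs by (simp add: T_def)
    have hm: "restr h \<in> borel_measurable lborel" by (rule restr_meas[OF hL])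
    have fm: "restr f \<in> borel_measurable lborel" by (rule restr_meas[OF fp])
    have fsm: "restr (fs n) \<in> borel_measurable lborel" for n using restr_meas fs by blast
    define Bn where "Bn = (\<lambda>n. ennreal C * (ennreal (2 powr p) * (normp_w p A f + normp_w p A (\<lambda>x. fs n x - f x))))"
    have bound: "(\<integral>\<^sup>+ x\<in>{0<..}. ennreal (gw \<alpha> \<rho> k x powr (p-2) * cmod (T n x) powr p * W x) \<partial>lborel) \<le> Bn n" for n
    proof -
      have "(\<integral>\<^sup>+ x\<in>{0<..}. ennreal (gw \<alpha> \<rho> k x powr (p-2) * cmod (T n x) powr p * W x) \<partial>lborel)
          \<le> ennreal C * normp_w p A (restr (fs n))"
        unfolding T_def FT_restr[symmetric, of A phi "fs n"]
        by (rule main[OF fsm]) (use fs in \<open>simp_all add: Lp_restr\<close>)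
      also have "normp_w p A (restr (fs n)) = normp_w p Ar (\<lambda>x. restr f x + restr (\<lambda>x. fs n x - f x) x)"
      proof -
        have "(\<lambda>x. restr f x + restr (\<lambda>x. fs n x - f x) x) = restr (fs n)"
          by (auto simp: restr_def fun_eq_iff scaleR_diff_right)
        then show ?thesis by (simp add: Ar_def normp_restrA)
      qed
      also have "\<dots> \<le> ennreal (2 powr p) * (normp_w p Ar (restr f) + normp_w p Ar (restr (\<lambda>x. fs n x - f x)))"
      proof (rule normp_tri[OF fm _ Arm Arnn])
        show "restr (\<lambda>x. fs n x - f x) \<in> borel_measurable lborel"
          using fsm[of n] fm by (simp add: restr_def algebra_simps)
      qed (use p1 in auto)
      also have "\<dots> = ennreal (2 powr p) * (normp_w p A f + normp_w p A (\<lambda>x. fs n x - f x))"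
        by (simp add: Ar_def normp_restrA normp_restr)
      finally show ?thesis unfolding Bn_def by (simp add: mult_left_mono)
    qed
    have Bconv: "Bn \<longlonglongrightarrow> ennreal C * (ennreal (2 powr p) * (normp_w p A f + 0))"
    proof -
      have "(\<lambda>n. normp_w p A f + normp_w p A (\<lambda>x. fs n x - f x)) \<longlonglongrightarrow> normp_w p A f + 0"
        by (intro tendsto_add tendsto_const conv1)
      then show ?thesis unfolding Bn_def by (intro ennreal_tendsto_cmult) auto
    qed
    have conv: "(\<lambda>n. normp_w (p/(p-1)) W (\<lambda>x. T n x - restr h x)) \<longlonglongrightarrow> 0"
    proof -
      have "normp_w (p/(p-1)) W (\<lambda>x. T n x - restr h x) = normp_w (p/(p-1)) W (\<lambda>x. FT A phi (fs n) x - h x)" for n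
        unfolding normp_w_def T_def by (intro nn_integral_cong) (auto simp: indicator_def)
      then show ?thesis using conv2 by simp
    qed
    have Vm: "(\<lambda>x. gw \<alpha> \<rho> k x powr (p-2)) \<in> borel_measurable lborel" unfolding gw_def by measurable
    have "(\<integral>\<^sup>+ x\<in>{0<..}. ennreal (gw \<alpha> \<rho> k x powr (p-2) * cmod (restr h x) powr p * W x) \<partial>lborel)
        \<le> ennreal C * (ennreal (2 powr p) * (normp_w p A f + 0))"
      by (rule pass_limit[OF _ _ Tm hm Vm _ Wm Wnn conv bound Bconv]) (use p1 in auto)
    moreover have "(\<integral>\<^sup>+ x\<in>{0<..}. ennreal (gw \<alpha> \<rho> k x powr (p-2) * cmod (restr h x) powr p * W x) \<partial>lborel)
        = (\<integral>\<^sup>+ x\<in>{0<..}. ennreal (gw \<alpha> \<rho> k x powr (p-2) * cmod (h x) powr p * W x) \<partial>lborel)"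
      by (intro nn_integral_cong) (auto simp: indicator_def)
    moreover have "ennreal C * (ennreal (2 powr p) * (normp_w p A f + 0)) = ennreal (C * 2 powr p) * normp_w p A f"
      using C by (simp add: ennreal_mult mult.assoc)
    ultimately show "(\<integral>\<^sup>+ x\<in>{0<..}. ennreal (gw \<alpha> \<rho> k x powr (p-2) * cmod (h x) powr p * W x) \<partial>lborel)
        \<le> ennreal (C * 2 powr p) * normp_w p A f" by simp
  qed
qed


end
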